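(* Fix $\beta\in(1,2)$, let $Y$ be the stationary random walk described in the context, and let $\mathcal C=\{2,4,6,\dots\}$ be the set of even positive integers. Then $\mathbf P[Y_0\in\mathcal C]=1/4$ and, as $t\to\infty$, $$\mathbf P[Y_t\in\mathcal C\mid Y_0\in\mathcal C]=\tfrac14+t^{\frac{1-\beta}{2}+o(1)},$$ while $\mathbf P[Y_s\in\mathcal C\ \forall s\in\{0,\dots,t\}]$ decays exponentially in $t$.
   Context: The graph has vertex set $\mathbb Z^*=\mathbb Z\setminus\{0\}$ and edges: nearest-neighbour edges $\{n,n+1\}$ and $\{-(n+1),-n\}$ for $n\ge1$, the edge $\{-1,1\}$, and a self-loop at every vertex. Conductances: $c_{n,n+1}=c_{-(n+1),-n}=n^{-\beta}$ for $n\ge1$; $c_{-1,1}=c_{1,1}=c_{-1,-1}=1/2$; and for $|n|\ge2$ the self-loop conductance is $c_{n,n}=c_{n,n-1}+c_{n,n+1}$. The discrete-time walk moves from $x$ to $y$ with probability $c_{x,y}/\pi(x)$, where $\pi(x)=\sum_y c_{x,y}$ (self-loop counted once); it is run in stationarity (started from normalized $\pi$), with law $\mathbf P$. (With these conductances, $\mathbf P[Y_{t+1}\in 2\mathbb Z\mid Y_t]=1/2$ regardless of $Y_t$.) *)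

theory Defs
  imports "HOL-Analysis.Analysis"
begin

text \<open>Vertex set Z* = Z minus 0, encoded inside int; vertex 0 has all conductances 0.\<close>

definition cond :: "real \<Rightarrow> int \<Rightarrow> int \<Rightarrow> real" where
  "cond \<beta> x y =
     (if x = 0 \<or> y = 0 then 0
      else if (x = -1 \<and> y = 1) \<or> (x = 1 \<and> y = -1) then 1/2
      else if x = y then
        (if \<bar>x\<bar> = 1 then 1/2
         else real_of_int (\<bar>x\<bar> - 1) powr (-\<beta>) + real_of_int \<bar>x\<bar> powr (-\<beta>))
      else if \<bar>x - y\<bar> = 1 \<and> (x > 0 \<longleftrightarrow> y > 0)
        then real_of_int (min \<bar>x\<bar> \<bar>y\<bar>) powr (-\<beta>)
      else 0)"

definition piw :: "real \<Rightarrow> int \<Rightarrow> real" where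
  "piw \<beta> x = (\<Sum>\<^sub>\<infinity>y\<in>UNIV. cond \<beta> x y)"

definition trans :: "real \<Rightarrow> int \<Rightarrow> int \<Rightarrow> real" where
  "trans \<beta> x y = (if x = 0 then 0 else cond \<beta> x y / piw \<beta> x)"

definition mu :: "real \<Rightarrow> int \<Rightarrow> real" where
  "mu \<beta> x = piw \<beta> x / (\<Sum>\<^sub>\<infinity>z\<in>UNIV - {0}. piw \<beta> z)"

definition evenPos :: "int set" where
  "evenPos = {n. n > 0 \<and> even n}"

text \<open>hitC t x = P[Y_t in A | Y_0 = x].\<close>
fun hitP :: "real \<Rightarrow> int set \<Rightarrow> nat \<Rightarrow> int \<Rightarrow> real" where
  "hitP \<beta> A 0 x = (if x \<in> A then 1 else 0)"
| "hitP \<beta> A (Suc t) x = (\<Sum>\<^sub>\<infinity>y\<in>UNIV. trans \<beta> x y * hitP \<beta> A t y)"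

text \<open>stayP t x = P[Y_s in A for all s in {0..t} | Y_0 = x].\<close>
fun stayP :: "real \<Rightarrow> int set \<Rightarrow> nat \<Rightarrow> int \<Rightarrow> real" where
  "stayP \<beta> A 0 x = (if x \<in> A then 1 else 0)"
| "stayP \<beta> A (Suc t) x =
     (if x \<in> A then (\<Sum>\<^sub>\<infinity>y\<in>UNIV. trans \<beta> x y * stayP \<beta> A t y) else 0)"

definition probY0 :: "real \<Rightarrow> int set \<Rightarrow> real" where
  "probY0 \<beta> A = (\<Sum>\<^sub>\<infinity>x\<in>A - {0}. mu \<beta> x)"

definition probCond :: "real \<Rightarrow> int set \<Rightarrow> nat \<Rightarrow> real" where
  "probCond \<beta> A t = (\<Sum>\<^sub>\<infinity>x\<in>A - {0}. mu \<beta> x * hitP \<beta> A t x) / probY0 \<beta> A"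

definition probStay :: "real \<Rightarrow> int set \<Rightarrow> nat \<Rightarrow> real" where
  "probStay \<beta> A t = (\<Sum>\<^sub>\<infinity>x\<in>A - {0}. mu \<beta> x * stayP \<beta> A t x)"

end

theory Submission
  imports Defs
begin


lemma mvt_powr:
  fixes r x y :: real
  assumes "0 < y" "y < x"
  shows "\<exists>z. y < z \<and> z < x \<and> x powr r - y powr r = (x - y) * (r * z powr (r - 1))"
proof -
  have "\<And>t. y \<le> t \<Longrightarrow> t \<le> x \<Longrightarrow> ((\<lambda>z. z powr r) has_real_derivative r * t powr (r - 1)) (at t)"
    using assms by (intro has_real_derivative_powr) auto
  from MVT2[OF assms(2) this] show ?thesis by blast
qed

lemma tangent_powr:
  fixes p x y :: real
  assumes "p > 1" "0 < y" "y \<le> x"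
  shows "y powr (1-p) - x powr (1-p) \<ge> (p-1) * x powr (-p) * (x-y)"
proof (cases "y = x")
  case True thus ?thesis by simp
next
  case False
  hence yx: "y < x" using assms by simp
  obtain z where z: "y < z" "z < x" "x powr (1-p) - y powr (1-p) = (x - y) * ((1-p) * z powr (1 - p - 1))"
    using mvt_powr[OF assms(2) yx] by blast
  have e: "1 - p - 1 = -p" by simp
  have "x powr (-p) \<le> z powr (-p)" using z assms by (intro powr_mono2') auto
  hence "(p-1) * x powr (-p) * (x-y) \<le> (p-1) * z powr (-p) * (x-y)"
    using assms yx by (intro mult_right_mono mult_left_mono) auto
  also have "\<dots> = y powr (1-p) - x powr (1-p)" using z(3) unfolding e by (simp add: algebra_simps)
  finally show ?thesis .
qed

lemma rec_decay:
  fixes a :: "nat \<Rightarrow> real" and c p :: real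
  assumes pos: "\<And>k. a k > 0" and c: "c > 0" and p: "p > 1"
    and step: "\<And>k. a (Suc k) \<le> a k - c * a k powr p" and that: "k \<ge> 1"
  shows "a k \<le> (c * (p-1) * real k) powr (-1/(p-1))"
proof -
  have inc: "a (Suc k) powr (1-p) \<ge> a k powr (1-p) + c * (p-1)" for k
  proof -
    have le: "a (Suc k) \<le> a k" using step[of k] pos[of k] c by (smt (verit) powr_gt_zero mult_pos_pos)
    have "a (Suc k) powr (1-p) - a k powr (1-p) \<ge> (p-1) * a k powr (-p) * (a k - a (Suc k))"
      using tangent_powr[OF p pos le] .
    moreover have "a k - a (Suc k) \<ge> c * a k powr p" using step[of k] by simp
    hence "(p-1) * a k powr (-p) * (a k - a (Suc k)) \<ge> (p-1) * a k powr (-p) * (c * a k powr p)"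
      using p by (intro mult_left_mono) auto
    moreover have "a k powr (-p) * a k powr p = 1" using pos[of k] by (simp add: powr_add[symmetric])
    ultimately show ?thesis by (simp add: algebra_simps)
  qed
  have lb: "a k powr (1-p) \<ge> c * (p-1) * real k" for k
  proof (induction k)
    case 0 thus ?case by simp
  next
    case (Suc k) thus ?case using inc[of k] by (simp add: algebra_simps)
  qed
  have pos2: "c * (p-1) * real k > 0" using that c p by simp
  have "(a k powr (1-p)) powr (-1/(p-1)) \<le> (c * (p-1) * real k) powr (-1/(p-1))"
    using lb[of k] pos2 p by (intro powr_mono2') auto
  moreover have "(a k powr (1-p)) powr (-1/(p-1)) = a k"
  proof -
    have "(1-p) * (-1/(p-1)) = 1" using p by (simp add: field_simps)
    thus ?thesis using pos[of k] by (simp add: powr_powr)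
  qed
  ultimately show ?thesis by simp
qed

locale bw = fixes b :: real assumes b1: "1 < b" and b2: "b < 2"
begin

definition cc :: "nat \<Rightarrow> real" where "cc n = real n powr (-b)"
definition pp :: "nat \<Rightarrow> real" where "pp n = 2 * (cc (n-1) + cc n)"
definition Qop :: "(nat \<Rightarrow> real) \<Rightarrow> nat \<Rightarrow> real" where
  "Qop g n = (if n \<le> 1 then g 2 / 2
     else (cc (n-1) * g (n-1) + (cc (n-1) + cc n) * g n + cc n * g (Suc n)) / pp n)"
definition sv :: "nat \<Rightarrow> nat \<Rightarrow> real" where "sv k = (Qop ^^ k) (\<lambda>_. 1)"
definition ip :: "nat \<Rightarrow> (nat \<Rightarrow> real) \<Rightarrow> (nat \<Rightarrow> real) \<Rightarrow> real" where
  "ip N f g = (\<Sum>n=1..N. pp n * f n * g n)"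
definition Dir :: "nat \<Rightarrow> (nat \<Rightarrow> real) \<Rightarrow> real" where
  "Dir N u = (u 1)\<^sup>2 + (\<Sum>k=1..<N. cc k * (u (Suc k) - u k)\<^sup>2)"

lemma cc0[simp]: "cc 0 = 0" by (simp add: cc_def)
lemma cc1[simp]: "cc (Suc 0) = 1" by (simp add: cc_def)
lemma cc_pos: "n \<ge> 1 \<Longrightarrow> cc n > 0" by (simp add: cc_def)
lemma cc_nonneg: "cc n \<ge> 0" by (simp add: cc_def)
lemma cc_anti: "1 \<le> m \<Longrightarrow> m \<le> n \<Longrightarrow> cc n \<le> cc m"
  unfolding cc_def using b1 by (intro powr_mono2') auto
lemma cc_le1: "cc n \<le> 1"
  using cc_anti[of 1 n] by (cases "n = 0") auto
lemma pp_pos: "n \<ge> 1 \<Longrightarrow> pp n > 0"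
  using cc_pos[of n] cc_nonneg[of "n-1"] by (simp add: pp_def)
lemma pp_nonneg: "pp n \<ge> 0"
  using cc_nonneg[of n] cc_nonneg[of "n-1"] by (simp add: pp_def)
lemma pp1[simp]: "pp (Suc 0) = 2" by (simp add: pp_def)

lemma Qop_num: "n \<ge> 2 \<Longrightarrow> pp n * Qop g n = cc (n-1) * g (n-1) + (cc (n-1) + cc n) * g n + cc n * g (Suc n)"
  using pp_pos[of n] by (simp add: Qop_def)

lemma Qop_mono:
  assumes "\<And>m. m \<ge> 1 \<Longrightarrow> f m \<le> g m" "n \<ge> 1"
  shows "Qop f n \<le> Qop g n"
proof (cases "n \<le> 1")
  case True thus ?thesis using assms by (simp add: Qop_def)
next
  case False
  have "cc (n-1) * f (n-1) + (cc (n-1) + cc n) * f n + cc n * f (Suc n)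
     \<le> cc (n-1) * g (n-1) + (cc (n-1) + cc n) * g n + cc n * g (Suc n)"
    using False assms cc_nonneg[of n] cc_nonneg[of "n-1"]
    by (intro add_mono mult_left_mono) auto
  thus ?thesis using False pp_pos[of n] by (simp add: Qop_def divide_right_mono)
qed

lemma Qop_nonneg: "(\<And>m. m \<ge> 1 \<Longrightarrow> f m \<ge> 0) \<Longrightarrow> n \<ge> 1 \<Longrightarrow> Qop f n \<ge> 0"
  using cc_nonneg[of n] cc_nonneg[of "n-1"] pp_pos[of n]
  by (auto simp: Qop_def intro!: divide_nonneg_pos add_nonneg_nonneg mult_nonneg_nonneg)

lemma Qop_const: "n \<ge> 2 \<Longrightarrow> Qop (\<lambda>_. c) n = c"
  using pp_pos[of n] by (simp add: Qop_def pp_def field_simps)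

lemma Qop_one_le: "n \<ge> 1 \<Longrightarrow> Qop (\<lambda>_. 1) n \<le> 1"
  using pp_pos[of n] by (cases "n \<le> 1") (auto simp: Qop_def pp_def)

lemma sv0: "sv 0 = (\<lambda>_. 1)" by (simp add: sv_def)
lemma svS: "sv (Suc k) = Qop (sv k)" by (simp add: sv_def)

lemma sv_bounds: "n \<ge> 1 \<Longrightarrow> 0 \<le> sv k n \<and> sv k n \<le> 1"
proof (induction k arbitrary: n)
  case 0 thus ?case by (simp add: sv0)
next
  case (Suc k)
  have "Qop (sv k) n \<le> Qop (\<lambda>_. 1) n" using Suc by (intro Qop_mono) auto
  moreover have "Qop (sv k) n \<ge> 0" using Suc by (intro Qop_nonneg) auto
  ultimately show ?case using Qop_one_le[of n] Suc by (simp add: svS)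
qed

lemma sv_far: "n > k \<Longrightarrow> sv k n = 1"
proof (induction k arbitrary: n)
  case 0 thus ?case by (simp add: sv0)
next
  case (Suc k)
  have "n \<ge> 2" using Suc by auto
  have "sv k (n-1) = 1" "sv k n = 1" "sv k (Suc n) = 1" using Suc by auto
  thus ?case using \<open>n \<ge> 2\<close> pp_pos[of n] by (simp add: svS Qop_def pp_def field_simps)
qed

lemma sv_dec: "n \<ge> 1 \<Longrightarrow> sv (Suc k) n \<le> sv k n"
proof (induction k arbitrary: n)
  case 0 thus ?case by (simp add: svS sv0 Qop_one_le)
next
  case (Suc k)
  show ?case unfolding svS[of "Suc k"] svS[of k] using Suc by (intro Qop_mono) (auto simp: svS)
qed

lemma sv_anti: assumes "n \<ge> 1" "k \<le> k'" shows "sv k' n \<le> sv k n"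
  using assms(2)
proof (induction k' rule: dec_induct)
  case base thus ?case by simp
next
  case (step m) thus ?case using sv_dec[of n m] assms(1) by linarith
qed

lemma rev_id: "N \<ge> 1 \<Longrightarrow> ip N f (Qop g) - ip N (Qop f) g = cc N * (f N * g (Suc N) - f (Suc N) * g N)"
proof (induction N rule: dec_induct)
  case base thus ?case by (simp add: ip_def Qop_def algebra_simps numeral_2_eq_2)
next
  case (step N)
  have e1: "pp (Suc N) * Qop g (Suc N) = cc N * g N + (cc N + cc (Suc N)) * g (Suc N) + cc (Suc N) * g (Suc (Suc N))"
    using step Qop_num[of "Suc N" g] by simp
  have e2: "pp (Suc N) * Qop f (Suc N) = cc N * f N + (cc N + cc (Suc N)) * f (Suc N) + cc (Suc N) * f (Suc (Suc N))"
    using step Qop_num[of "Suc N" f] by simp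
  have "ip (Suc N) f (Qop g) - ip (Suc N) (Qop f) g = (ip N f (Qop g) - ip N (Qop f) g)
     + (f (Suc N) * (pp (Suc N) * Qop g (Suc N)) - (pp (Suc N) * Qop f (Suc N)) * g (Suc N))"
    using step by (simp add: ip_def algebra_simps)
  also have "\<dots> = cc (Suc N) * (f (Suc N) * g (Suc (Suc N)) - f (Suc (Suc N)) * g (Suc N))"
    unfolding e1 e2 step.IH by (simp add: algebra_simps)
  finally show ?case .
qed

lemma dir_id: "N \<ge> 1 \<Longrightarrow> ip N u u - ip N u (Qop u) = Dir N u - cc N * u N * (u (Suc N) - u N)"
proof (induction N rule: dec_induct)
  case base thus ?case by (simp add: ip_def Qop_def Dir_def algebra_simps power2_eq_square numeral_2_eq_2)
next
  case (step N)
  have e1: "pp (Suc N) * Qop u (Suc N) = cc N * u N + (cc N + cc (Suc N)) * u (Suc N) + cc (Suc N) * u (Suc (Suc N))"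
    using step Qop_num[of "Suc N" u] by simp
  have "ip (Suc N) u u - ip (Suc N) u (Qop u) = (ip N u u - ip N u (Qop u))
     + (pp (Suc N) * u (Suc N) * u (Suc N) - u (Suc N) * (pp (Suc N) * Qop u (Suc N)))"
    using step by (simp add: ip_def algebra_simps)
  also have "Dir (Suc N) u = Dir N u + cc N * (u (Suc N) - u N)\<^sup>2"
    using step by (simp add: Dir_def)
  ultimately show ?case unfolding e1 step.IH
    by (simp add: pp_def algebra_simps power2_eq_square)
qed


lemma cc_summable: "summable cc"
proof -
  have "summable (\<lambda>n. of_nat n powr (-b) :: real)" using b1 by (subst summable_real_powr_iff) auto
  thus ?thesis by (simp add: cc_def[abs_def])
qed

lemma pp_summable: "summable pp"
proof -
  have "summable (\<lambda>n. cc (Suc n - 1))" using cc_summable by simp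
  hence "summable (\<lambda>n. cc (n - 1))" by (subst (asm) summable_Suc_iff)
  thus ?thesis unfolding pp_def[abs_def] using cc_summable by (intro summable_mult summable_add) auto
qed

definition Ptot :: real where "Ptot = suminf pp"
definition tl :: "nat \<Rightarrow> real" where "tl M = Ptot - (\<Sum>n=1..<M. pp n)"

lemma psum_le_Ptot: "(\<Sum>n\<in>A. pp n) \<le> Ptot" if "finite A"
  unfolding Ptot_def using that pp_summable pp_nonneg by (intro sum_le_suminf) auto

lemma tl_step: "M \<ge> 1 \<Longrightarrow> tl M = pp M + tl (Suc M)"
  unfolding tl_def by (simp add: sum.atLeastLessThan_Suc)

lemma tl_pos: "M \<ge> 1 \<Longrightarrow> tl M > 0"
proof -
  assume M: "M \<ge> 1"
  have "(\<Sum>n=1..<Suc M. pp n) \<le> Ptot" by (rule psum_le_Ptot) auto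
  thus ?thesis using M pp_pos[of M] unfolding tl_def by (simp add: sum.atLeastLessThan_Suc)
qed

lemma tl_split: "1 \<le> M \<Longrightarrow> M \<le> Suc N \<Longrightarrow> tl M = (\<Sum>n=M..N. pp n) + tl (Suc N)"
proof -
  assume a: "1 \<le> M" "M \<le> Suc N"
  have "{1..<Suc N} = {1..<M} \<union> {M..N}" using a by auto
  hence "(\<Sum>n=1..<Suc N. pp n) = (\<Sum>n=1..<M. pp n) + (\<Sum>n=M..N. pp n)"
    by (simp add: sum.union_disjoint ivl_disj_int)
  thus ?thesis unfolding tl_def by simp
qed

definition GG :: "nat \<Rightarrow> real" where "GG n = real n powr (1 - b) / (b - 1)"

lemma GG_nonneg: "GG n \<ge> 0" using b1 by (simp add: GG_def)

lemma cc_tel: assumes "n \<ge> 2" shows "cc n \<le> GG (n-1) - GG n"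
proof -
  have y: "0 < real (n-1)" "real (n-1) < real n" using assms by auto
  obtain z where z: "real (n-1) < z" "z < real n"
    "real n powr (1-b) - real (n-1) powr (1-b) = (real n - real (n-1)) * ((1-b) * z powr (1 - b - 1))"
    using mvt_powr[OF y, of "1-b"] by blast
  have d: "real n - real (n-1) = 1" using assms by auto
  have e: "1 - b - 1 = -b" by simp
  have zp: "z > 0" using z y by linarith
  have "real n powr (-b) \<le> z powr (-b)" using zp z b1 by (intro powr_mono2') auto
  hence "(b-1) * real n powr (-b) \<le> (b-1) * z powr (-b)" using b1 by (intro mult_left_mono) auto
  also have "\<dots> = real (n-1) powr (1-b) - real n powr (1-b)" using z(3) unfolding d e by argo
  finally have "(b-1) * cc n \<le> real (n-1) powr (1-b) - real n powr (1-b)" unfolding cc_def .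
  hence "cc n \<le> (real (n-1) powr (1-b) - real n powr (1-b)) / (b-1)" using b1 by (simp add: pos_le_divide_eq mult.commute)
  thus ?thesis unfolding GG_def by (simp add: diff_divide_distrib)
qed

lemma pp_tel: assumes "n \<ge> 3" shows "pp n \<le> 4 * (GG (n-2) - GG (n-1))"
proof -
  have "cc n \<le> cc (n-1)" using assms by (intro cc_anti) auto
  moreover have h: "cc (n-1) \<le> GG (n-1-1) - GG (n-1)" using assms by (intro cc_tel) auto
  moreover have "n - 1 - 1 = n - 2" by simp
  ultimately have "cc n \<le> cc (n-1)" "cc (n-1) \<le> GG (n-2) - GG (n-1)" by metis+
  thus ?thesis unfolding pp_def by argo
qed

lemma pp_sum_tel: assumes "M \<ge> 3" "N \<ge> M - 1" shows "(\<Sum>n=M..N. pp n) \<le> 4 * (GG (M-2) - GG (N-1))"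
  using assms(2)
proof (induction N rule: dec_induct)
  case base
  have "M - 1 - 1 = M - 2" by simp
  thus ?case using assms by simp
next
  case (step N)
  have "(\<Sum>n=M..Suc N. pp n) = (\<Sum>n=M..N. pp n) + pp (Suc N)"
    using step(1) assms by (simp add: sum.cl_ivl_Suc)
  moreover have "pp (Suc N) \<le> 4 * (GG (Suc N - 2) - GG (Suc N - 1))" using step(1) assms by (intro pp_tel) auto
  moreover have "Suc N - 2 = N - 1" by simp
  ultimately show ?case using step.IH by simp
qed

definition Ct :: real where "Ct = 12 / (b - 1)"

lemma GG_bound: assumes "M \<ge> 3" shows "4 * GG (M - 2) \<le> Ct * real M powr (1 - b)"
proof -
  have m3: "real M / 3 \<le> real (M - 2)" using assms by auto
  have mp: "real M / 3 > 0" using assms by auto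
  have h1: "real (M-2) powr (1-b) \<le> (real M / 3) powr (1-b)" using b1 m3 mp by (intro powr_mono2') auto
  have h2: "(real M / 3) powr (1-b) = real M powr (1-b) / 3 powr (1-b)" by (rule powr_divide)
  have h3: "3 powr (b - 1) = inverse (3 powr (1-b) :: real)" using powr_minus[of "3::real" "1-b"] by simp
  have h4: "3 powr (b - 1) \<le> (3::real) powr 1" using b2 by (intro powr_mono) auto
  have h5: "real M powr (1-b) / 3 powr (1-b) = real M powr (1-b) * 3 powr (b - 1)"
    using h3 by (simp add: divide_inverse)
  have h6: "real M powr (1-b) * 3 powr (b - 1) \<le> real M powr (1-b) * 3"
    using h4 by (intro mult_left_mono) auto
  have "real (M-2) powr (1-b) \<le> 3 * real M powr (1-b)" using h1 h2 h5 h6 by linarith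
  hence "real (M-2) powr (1-b) / (b - 1) \<le> 3 * real M powr (1-b) / (b-1)"
    using b1 by (intro divide_right_mono) auto
  hence "4 * GG (M-2) \<le> 4 * (3 * real M powr (1-b) / (b-1))" unfolding GG_def by linarith
  also have "\<dots> = Ct * real M powr (1 - b)" unfolding Ct_def by simp
  finally show ?thesis .
qed

lemma tl_bound: assumes "M \<ge> 3" shows "tl M \<le> Ct * real M powr (1 - b)"
proof -
  have lim: "(\<lambda>K. \<Sum>n<K. pp n) \<longlonglongrightarrow> Ptot" unfolding Ptot_def using pp_summable
    by (simp add: summable_LIMSEQ)
  have "\<forall>K\<ge>M. (\<Sum>n<K. pp n) \<le> (\<Sum>n=1..<M. pp n) + Ct * real M powr (1 - b)"
  proof (intro allI impI)
    fix K assume K: "K \<ge> M"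
    have e1: "(\<Sum>n<K. pp n) = (\<Sum>n=0..<M. pp n) + (\<Sum>n=M..<K. pp n)"
    proof -
      have "(\<Sum>n=0..<M. pp n) + (\<Sum>n=M..<K. pp n) = (\<Sum>n=0..<K. pp n)"
        using K by (intro sum.atLeastLessThan_concat) auto
      thus ?thesis by (simp add: atLeast0LessThan)
    qed
    have e2: "(\<Sum>n=0..<M. pp n) = pp 0 + (\<Sum>n=Suc 0..<M. pp n)"
      using assms by (intro sum.atLeast_Suc_lessThan) auto
    have e3: "{M..<K} = {M..K-1}" using K assms by auto
    have p0: "pp 0 = 0" by (simp add: pp_def)
    have s1: "(\<Sum>n<K. pp n) = (\<Sum>n=1..<M. pp n) + (\<Sum>n=M..K-1. pp n)"
      using e1 e2 e3 p0 by simp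
    have s2: "(\<Sum>n=M..K-1. pp n) \<le> 4 * (GG (M-2) - GG (K-1-1))" using K assms by (intro pp_sum_tel) auto
    have s3: "4 * (GG (M-2) - GG (K-1-1)) \<le> 4 * GG (M-2)" using GG_nonneg[of "K-1-1"] by simp
    have s4: "4 * GG (M-2) \<le> Ct * real M powr (1 - b)" by (rule GG_bound[OF assms])
    show "(\<Sum>n<K. pp n) \<le> (\<Sum>n=1..<M. pp n) + Ct * real M powr (1 - b)"
      using s1 s2 s3 s4 by linarith
  qed
  then have "Ptot \<le> (\<Sum>n=1..<M. pp n) + Ct * real M powr (1 - b)"
  proof (intro LIMSEQ_le_const2[OF lim])
    show "\<exists>N. \<forall>K\<ge>N. (\<Sum>n<K. pp n) \<le> (\<Sum>n=1..<M. pp n) + Ct * real M powr (1 - b)"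
      using \<open>\<forall>K\<ge>M. _\<close> by (intro exI[of _ M])
  qed
  thus ?thesis unfolding tl_def by linarith
qed


lemma u_telesc: fixes u :: "nat \<Rightarrow> real" shows "n \<ge> 1 \<Longrightarrow> u n = u 1 + (\<Sum>k=1..<n. u (Suc k) - u k)"
proof (induction n)
  case 0 thus ?case by simp
next
  case (Suc m)
  show ?case
  proof (cases "m = 0")
    case True thus ?thesis by simp
  next
    case False
    hence "(\<Sum>k=1..<Suc m. u (Suc k) - u k) = (\<Sum>k=1..<m. u (Suc k) - u k) + (u (Suc m) - u m)"
      by (simp add: sum.atLeastLessThan_Suc)
    moreover have "u m = u 1 + (\<Sum>k=1..<m. u (Suc k) - u k)"
      using Suc.IH False by (metis One_nat_def Suc_leI not_gr0)
    ultimately show ?thesis by linarith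
  qed
qed

lemma pt_bound:
  assumes n: "1 \<le> n" "n \<le> N"
  shows "(u n)\<^sup>2 \<le> (real n * real n powr b) * Dir N u"
proof -
  define a where "a k = (if k = 0 then 1 else sqrt (real k powr b))" for k
  define bb where "bb k = (if k = 0 then u 1 else sqrt (cc k) * (u (Suc k) - u k))" for k
  have ab: "a k * bb k = u (Suc k) - u k" if "k \<ge> 1" for k
  proof -
    have "sqrt (real k powr b) * sqrt (cc k) = 1"
      using that by (simp add: cc_def real_sqrt_mult[symmetric] powr_add[symmetric])
    thus ?thesis using that unfolding a_def bb_def by (simp add: mult.assoc[symmetric])
  qed
  have s1: "(\<Sum>k=0..<n. a k * bb k) = u n"
  proof -
    have "(\<Sum>k=0..<n. a k * bb k) = a 0 * bb 0 + (\<Sum>k=Suc 0..<n. a k * bb k)"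
      using n by (intro sum.atLeast_Suc_lessThan) auto
    also have "(\<Sum>k=Suc 0..<n. a k * bb k) = (\<Sum>k=1..<n. u (Suc k) - u k)"
      using ab by (intro sum.cong) auto
    finally show ?thesis using u_telesc[OF n(1), of u] by (simp add: a_def bb_def)
  qed
  have s2: "(\<Sum>k=0..<n. (a k)\<^sup>2) \<le> real n * real n powr b"
  proof -
    have "(\<Sum>k=0..<n. (a k)\<^sup>2) = (a 0)\<^sup>2 + (\<Sum>k=Suc 0..<n. (a k)\<^sup>2)"
      using n by (intro sum.atLeast_Suc_lessThan) auto
    also have "(\<Sum>k=Suc 0..<n. (a k)\<^sup>2) \<le> (\<Sum>k=Suc 0..<n. real n powr b)"
    proof (intro sum_mono)
      fix k assume k: "k \<in> {Suc 0..<n}"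
      have "(a k)\<^sup>2 = real k powr b" using k by (simp add: a_def)
      also have "\<dots> \<le> real n powr b" using k b1 by (intro powr_mono2) auto
      finally show "(a k)\<^sup>2 \<le> real n powr b" .
    qed
    also have "(\<Sum>k=Suc 0..<n. real n powr b) = real (n - 1) * real n powr b" by simp
    finally have "(\<Sum>k=0..<n. (a k)\<^sup>2) \<le> 1 + real (n-1) * real n powr b" by (simp add: a_def)
    also have "\<dots> \<le> real n * real n powr b"
    proof -
      have "1 \<le> real n powr b" using n b1 by (intro ge_one_powr_ge_zero) auto
      thus ?thesis using n by (simp add: of_nat_diff algebra_simps)
    qed
    finally show ?thesis .
  qed
  have s3: "(\<Sum>k=0..<n. (bb k)\<^sup>2) \<le> Dir N u"
  proof -
    have "(\<Sum>k=0..<n. (bb k)\<^sup>2) = (bb 0)\<^sup>2 + (\<Sum>k=Suc 0..<n. (bb k)\<^sup>2)"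
      using n by (intro sum.atLeast_Suc_lessThan) auto
    also have "(\<Sum>k=Suc 0..<n. (bb k)\<^sup>2) = (\<Sum>k=1..<n. cc k * (u (Suc k) - u k)\<^sup>2)"
      using cc_nonneg by (intro sum.cong) (auto simp: bb_def power_mult_distrib)
    also have "\<dots> \<le> (\<Sum>k=1..<N. cc k * (u (Suc k) - u k)\<^sup>2)"
      using n cc_nonneg by (intro sum_mono2) auto
    finally show ?thesis by (simp add: bb_def Dir_def)
  qed
  have "(u n)\<^sup>2 \<le> (\<Sum>k=0..<n. (a k)\<^sup>2) * (\<Sum>k=0..<n. (bb k)\<^sup>2)"
    using Cauchy_Schwarz_ineq_sum[of a bb "{0..<n}"] s1 by simp
  also have "\<dots> \<le> (real n * real n powr b) * Dir N u"
    using s2 s3 by (intro mult_mono) (auto intro: sum_nonneg)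
  finally show ?thesis .
qed

lemma pp_weight: assumes "n \<ge> 1" shows "pp n * (real n * real n powr b) \<le> 10 * real n"
proof -
  have A: "cc n * real n powr b = 1" using assms by (simp add: cc_def powr_add[symmetric])
  have B: "cc (n-1) * real n powr b \<le> 4"
  proof (cases "n = 1")
    case True thus ?thesis by simp
  next
    case False
    hence n2: "n \<ge> 2" using assms by simp
    have "cc (n-1) * real n powr b = real n powr b / real (n-1) powr b"
      unfolding cc_def by (simp add: powr_minus divide_inverse mult.commute)
    also have "\<dots> = (real n / real (n-1)) powr b" by (rule powr_divide[symmetric])
    also have "\<dots> \<le> 2 powr b"
      using n2 b1 by (intro powr_mono2) (auto simp: divide_le_eq of_nat_diff)
    also have "\<dots> \<le> 2 powr 2" using b2 by (intro powr_mono) auto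
    finally show ?thesis by simp
  qed
  have "pp n * (real n * real n powr b) = real n * (2 * (cc (n-1) * real n powr b + cc n * real n powr b))"
    by (simp add: pp_def algebra_simps)
  also have "\<dots> \<le> real n * (2 * (4 + 1))" using A B by (intro mult_left_mono) auto
  finally show ?thesis by simp
qed

lemma nash:
  assumes u: "\<And>n. 1 \<le> n \<Longrightarrow> n \<le> N \<Longrightarrow> 0 \<le> u n \<and> u n \<le> 1" and M: "1 \<le> M" "M \<le> N"
  shows "ip N u u \<le> 10 * (real M)\<^sup>2 * Dir N u + (\<Sum>n=M..N. pp n)"
proof -
  have D0: "Dir N u \<ge> 0" unfolding Dir_def using cc_nonneg by (intro add_nonneg_nonneg sum_nonneg mult_nonneg_nonneg) auto
  have "{1..N} = {1..<M} \<union> {M..N}" using M by auto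
  hence "ip N u u = (\<Sum>n=1..<M. pp n * u n * u n) + (\<Sum>n=M..N. pp n * u n * u n)"
    unfolding ip_def by (simp add: sum.union_disjoint ivl_disj_int)
  also have "(\<Sum>n=1..<M. pp n * u n * u n) \<le> (\<Sum>n=1..<M. 10 * real M * Dir N u)"
  proof (intro sum_mono)
    fix n assume n: "n \<in> {1..<M}"
    have "pp n * u n * u n = pp n * (u n)\<^sup>2" by (simp add: power2_eq_square)
    also have "\<dots> \<le> pp n * ((real n * real n powr b) * Dir N u)"
      using n M pt_bound[of n N u] pp_nonneg[of n] by (intro mult_left_mono) auto
    also have "\<dots> = (pp n * (real n * real n powr b)) * Dir N u" by simp
    also have "\<dots> \<le> (10 * real n) * Dir N u" using pp_weight[of n] n D0 by (intro mult_right_mono) auto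
    also have "\<dots> \<le> (10 * real M) * Dir N u" using n D0 by (intro mult_right_mono) auto
    finally show "pp n * u n * u n \<le> 10 * real M * Dir N u" .
  qed
  also have "(\<Sum>n=1..<M. 10 * real M * Dir N u) \<le> 10 * (real M)\<^sup>2 * Dir N u"
    using D0 M by (simp add: power2_eq_square of_nat_diff algebra_simps mult_left_mono)
  also have "(\<Sum>n=M..N. pp n * u n * u n) \<le> (\<Sum>n=M..N. pp n)"
  proof (intro sum_mono)
    fix n assume n: "n \<in> {M..N}"
    have "u n * u n \<le> 1" using u[of n] n M by (simp add: mult_le_one)
    thus "pp n * u n * u n \<le> pp n" using pp_nonneg[of n] mult_left_mono[of "u n * u n" 1 "pp n"] by (simp add: mult.assoc)
  qed
  finally show ?thesis by simp
qed


definition AA :: "nat \<Rightarrow> real" where "AA k = ip (Suc k) (sv k) (sv k) + tl (Suc (Suc k))"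
definition Fq :: "nat \<Rightarrow> real" where "Fq n = ip (Suc n) (\<lambda>_. 1) (sv n) + tl (Suc (Suc n))"

lemma ip_Suc: "ip (Suc N) f g = ip N f g + pp (Suc N) * f (Suc N) * g (Suc N)"
  by (simp add: ip_def)

lemma AA_eq: assumes "N \<ge> Suc k" shows "AA k = ip N (sv k) (sv k) + tl (Suc N)"
  using assms
proof (induction N rule: dec_induct)
  case base thus ?case by (simp add: AA_def)
next
  case (step N)
  have "sv k (Suc N) = 1" using step by (intro sv_far) auto
  thus ?case using step tl_step[of "Suc N"] by (simp add: ip_Suc)
qed

lemma Fq_eq: assumes "N \<ge> Suc n" shows "Fq n = ip N (\<lambda>_. 1) (sv n) + tl (Suc N)"
  using assms
proof (induction N rule: dec_induct)
  case base thus ?case by (simp add: Fq_def)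
next
  case (step N)
  have "sv n (Suc N) = 1" using step by (intro sv_far) auto
  thus ?case using step tl_step[of "Suc N"] by (simp add: ip_Suc)
qed

lemma ip_nonneg: "(\<And>n. 1 \<le> n \<Longrightarrow> f n * g n \<ge> 0) \<Longrightarrow> ip N f g \<ge> 0"
  unfolding ip_def using pp_nonneg by (intro sum_nonneg) (auto simp: mult.assoc)

lemma ip_mono: "(\<And>n. 1 \<le> n \<Longrightarrow> n \<le> N \<Longrightarrow> f n * g n \<le> f' n * g' n) \<Longrightarrow> ip N f g \<le> ip N f' g'"
  unfolding ip_def using pp_nonneg by (intro sum_mono) (auto simp: mult.assoc intro: mult_left_mono)

lemma AA_pos: "AA k > 0"
proof -
  have "ip (Suc k) (sv k) (sv k) \<ge> 0" using sv_bounds by (intro ip_nonneg) auto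
  thus ?thesis using tl_pos[of "Suc (Suc k)"] by (simp add: AA_def)
qed

lemma AA_le: "AA k \<le> Ptot"
proof -
  have "ip (Suc k) (sv k) (sv k) \<le> ip (Suc k) (\<lambda>_. 1) (\<lambda>_. 1)"
    using sv_bounds by (intro ip_mono) (auto intro: mult_le_one)
  moreover have "ip (Suc k) (\<lambda>_. 1) (\<lambda>_. 1) + tl (Suc (Suc k)) = Ptot"
    unfolding ip_def tl_def by (simp add: atLeastLessThanSuc_atLeastAtMost)
  ultimately show ?thesis unfolding AA_def by linarith
qed

lemma rev_sv: "N > i + m \<Longrightarrow> N > j + m \<Longrightarrow> ip N (sv i) (sv (j + m)) = ip N (sv (i + m)) (sv j)"
proof (induction m arbitrary: i)
  case 0 thus ?case by simp
next
  case (Suc m)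
  have N1: "N \<ge> 1" using Suc by auto
  have b0: "cc N * (sv i N * sv (j+m) (Suc N) - sv i (Suc N) * sv (j+m) N) = 0"
    using Suc by (simp add: sv_far)
  have "ip N (sv i) (sv (j + Suc m)) = ip N (sv i) (Qop (sv (j+m)))" by (simp add: svS)
  also have "\<dots> = ip N (Qop (sv i)) (sv (j+m))" using rev_id[OF N1, of "sv i" "sv (j+m)"] b0 by simp
  also have "\<dots> = ip N (sv (Suc i)) (sv (j+m))" by (simp add: svS)
  also have "\<dots> = ip N (sv (Suc i + m)) (sv j)" using Suc by (intro Suc.IH) auto
  finally show ?case by simp
qed

lemma Fq_AA: "Fq (2*k) = AA k"
proof -
  have "Fq (2*k) = ip (Suc (2*k)) (\<lambda>_. 1) (sv (2*k)) + tl (Suc (Suc (2*k)))" by (simp add: Fq_def)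
  also have "ip (Suc (2*k)) (\<lambda>_. 1) (sv (2*k)) = ip (Suc (2*k)) (sv 0) (sv (k + k))"
    by (simp add: sv0 mult_2)
  also have "\<dots> = ip (Suc (2*k)) (sv k) (sv k)" using rev_sv[of 0 k "Suc (2*k)" k] by simp
  also have "\<dots> + tl (Suc (Suc (2*k))) = AA k" using AA_eq[of k "Suc (2*k)"] by simp
  finally show ?thesis .
qed

lemma AA_step: assumes "N \<ge> Suc (Suc k)" shows "AA (Suc k) \<le> AA k - Dir N (sv k)"
proof -
  have N1: "N \<ge> 1" using assms by simp
  have "ip N (sv (Suc k)) (sv (Suc k)) \<le> ip N (sv k) (sv (Suc k))"
  proof (intro ip_mono)
    fix n :: nat assume n: "1 \<le> n" "n \<le> N"
    have "sv (Suc k) n \<le> sv k n" "0 \<le> sv (Suc k) n" using sv_dec[OF n(1)] sv_bounds[OF n(1)] by auto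
    thus "sv (Suc k) n * sv (Suc k) n \<le> sv k n * sv (Suc k) n" by (intro mult_right_mono)
  qed
  also have "ip N (sv k) (sv (Suc k)) = ip N (sv k) (sv k) - Dir N (sv k)"
    using dir_id[OF N1, of "sv k"] assms by (simp add: svS sv_far)
  finally have "ip N (sv (Suc k)) (sv (Suc k)) \<le> ip N (sv k) (sv k) - Dir N (sv k)" .
  thus ?thesis using AA_eq[of k N] AA_eq[of "Suc k" N] assms by simp
qed

lemma AA_nash: assumes "M \<ge> 3" shows "AA k \<le> 10 * (real M)\<^sup>2 * Dir (max M (Suc (Suc k))) (sv k) + Ct * real M powr (1 - b)"
proof -
  define N where "N = max M (Suc (Suc k))"
  have N: "N \<ge> M" "N \<ge> Suc (Suc k)" unfolding N_def by auto
  have "ip N (sv k) (sv k) \<le> 10 * (real M)\<^sup>2 * Dir N (sv k) + (\<Sum>n=M..N. pp n)"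
    using sv_bounds assms N by (intro nash) auto
  moreover have "AA k = ip N (sv k) (sv k) + tl (Suc N)" using N by (intro AA_eq) auto
  moreover have "tl M = (\<Sum>n=M..N. pp n) + tl (Suc N)" using N assms by (intro tl_split) auto
  moreover have "tl M \<le> Ct * real M powr (1 - b)" by (rule tl_bound[OF assms])
  ultimately show ?thesis unfolding N_def by linarith
qed

lemma Ct_pos: "Ct > 0" using b1 by (simp add: Ct_def)
lemma Ptot_pos: "Ptot > 0" using AA_pos[of 0] AA_le[of 0] by linarith

definition qq :: real where "qq = 2 / (b - 1)"
definition X0 :: real where "X0 = (2 * Ct / Ptot) powr (1 / (b - 1))"
definition KK :: real where "KK = 1 + 4 / X0"
definition cA :: real where "cA = 1 / (20 * KK\<^sup>2 * (2 * Ct) powr qq)"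

lemma X0_pos: "X0 > 0" using Ct_pos Ptot_pos by (simp add: X0_def)
lemma qq_pos: "qq > 0" using b1 by (simp add: qq_def)
lemma KK_pos: "KK > 0"
proof -
  have "4 / X0 > 0" using X0_pos by simp
  thus ?thesis unfolding KK_def by linarith
qed
lemma cA_pos: "cA > 0"
proof -
  have "(2 * Ct) powr qq > 0" using Ct_pos by simp
  thus ?thesis using KK_pos unfolding cA_def by simp
qed

lemma AA_rec: "AA (Suc k) \<le> AA k - cA * AA k powr (1 + qq)"
proof -
  define A where "A = AA k"
  have A0: "A > 0" "A \<le> Ptot" using AA_pos AA_le unfolding A_def by auto
  define X where "X = (2 * Ct / A) powr (1 / (b - 1))"
  have Xpos: "X > 0" using A0 Ct_pos by (simp add: X_def)
  define M where "M = nat (ceiling X) + 3"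
  have M3: "M \<ge> 3" by (simp add: M_def)
  have MX: "real M \<ge> X" unfolding M_def by linarith
  have MX4: "real M \<le> X + 4" unfolding M_def using Xpos by linarith
  have "Ct * real M powr (1 - b) \<le> Ct * X powr (1 - b)"
    using MX Xpos b1 Ct_pos by (intro mult_left_mono powr_mono2') auto
  also have "X powr (1 - b) = (2 * Ct / A) powr (1 / (b - 1) * (1 - b))"
    unfolding X_def by (simp add: powr_powr)
  also have "1 / (b - 1) * (1 - b) = -1" using b1 by (simp add: field_simps)
  also have "(2 * Ct / A) powr (-1) = A / (2 * Ct)" using A0 Ct_pos by (simp add: powr_minus)
  finally have tlb: "Ct * real M powr (1 - b) \<le> A / 2" using Ct_pos by simp
  define N where "N = max M (Suc (Suc k))"
  have st: "AA (Suc k) \<le> A - Dir N (sv k)" unfolding A_def N_def by (intro AA_step) auto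
  have na: "A \<le> 10 * (real M)\<^sup>2 * Dir N (sv k) + A / 2"
    using AA_nash[OF M3, of k] tlb unfolding A_def N_def by linarith
  have Mpos: "real M > 0" using M3 by simp
  hence "A / (20 * (real M)\<^sup>2) \<le> Dir N (sv k)" using na by (simp add: field_simps)
  hence st2: "AA (Suc k) \<le> A - A / (20 * (real M)\<^sup>2)" using st by linarith
  have XX0: "X \<ge> X0"
  proof -
    have "2 * Ct / Ptot \<le> 2 * Ct / A" using A0 Ct_pos by (intro divide_left_mono) auto
    thus ?thesis unfolding X_def X0_def using b1 Ct_pos Ptot_pos by (intro powr_mono2) auto
  qed
  have MK: "real M \<le> KK * X"
  proof -
    have "4 \<le> 4 * X / X0" using XX0 X0_pos by (simp add: field_simps)
    thus ?thesis using MX4 unfolding KK_def by (simp add: algebra_simps)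
  qed
  have "(real M)\<^sup>2 \<le> (KK * X)\<^sup>2" using MK Mpos by (intro power_mono) auto
  also have "(KK * X)\<^sup>2 = KK\<^sup>2 * X\<^sup>2" by (simp add: power_mult_distrib)
  also have "X\<^sup>2 = (2 * Ct / A) powr qq"
  proof -
    have "X\<^sup>2 = X powr 2" using Xpos by (simp add: powr_realpow)
    also have "\<dots> = (2 * Ct / A) powr (1 / (b - 1) * 2)" unfolding X_def by (simp add: powr_powr)
    finally show ?thesis by (simp add: qq_def)
  qed
  also have "(2 * Ct / A) powr qq = (2 * Ct) powr qq / A powr qq" by (rule powr_divide)
  finally have M2: "(real M)\<^sup>2 \<le> KK\<^sup>2 * ((2 * Ct) powr qq / A powr qq)" .
  have KKpos: "KK > 0" by (rule KK_pos)
  have "cA * A powr (1 + qq) = A / (20 * (KK\<^sup>2 * ((2 * Ct) powr qq / A powr qq)))"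
    using A0 Ct_pos KKpos by (simp add: cA_def powr_add field_simps)
  also have "\<dots> \<le> A / (20 * (real M)\<^sup>2)"
  proof (rule divide_left_mono)
    show "20 * (real M)\<^sup>2 \<le> 20 * (KK\<^sup>2 * ((2 * Ct) powr qq / A powr qq))" using M2 by simp
    show "0 \<le> A" using A0 by simp
    show "0 < 20 * (KK\<^sup>2 * ((2 * Ct) powr qq / A powr qq)) * (20 * (real M)\<^sup>2)"
      using KKpos Ct_pos A0 Mpos by (intro mult_pos_pos divide_pos_pos) auto
  qed
  finally show ?thesis using st2 unfolding A_def by linarith
qed

lemma upper_AA: "\<exists>Cu. \<forall>k\<ge>1. AA k \<le> Cu * real k powr (-(b - 1) / 2)"
proof -
  have q: "1 + qq - 1 = qq" by simp
  have e: "-1 / qq = -(b-1)/2" using b1 by (simp add: qq_def)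
  have "AA k \<le> (cA * qq) powr (-(b-1)/2) * real k powr (-(b - 1) / 2)" if "k \<ge> 1" for k
  proof -
    have "AA k \<le> (cA * (1 + qq - 1) * real k) powr (-1 / (1 + qq - 1))"
      using rec_decay[of AA cA "1 + qq" k] AA_pos cA_pos qq_pos AA_rec that by auto
    also have "\<dots> = (cA * qq * real k) powr (-(b-1)/2)" unfolding q e ..
    also have "\<dots> = (cA * qq) powr (-(b-1)/2) * real k powr (-(b - 1) / 2)" by (rule powr_mult)
    finally show ?thesis .
  qed
  thus ?thesis by blast
qed

lemma upper_final: "\<exists>cu. \<forall>n\<ge>2. Fq n \<le> cu * real n powr ((1 - b) / 2)"
proof -
  obtain Cu where Cu: "\<And>k. k \<ge> 1 \<Longrightarrow> AA k \<le> Cu * real k powr (-(b - 1) / 2)" using upper_AA by blast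
  have Cu0: "Cu \<ge> 0" using Cu[of 1] AA_pos[of 1] by simp
  have "Fq n \<le> (3 * Cu) * real n powr ((1 - b) / 2)" if n: "n \<ge> 2" for n
  proof -
    define k where "k = n div 2"
    have k1: "k \<ge> 1" using n by (simp add: k_def)
    have f1: "Fq n = ip (Suc n) (\<lambda>_. 1) (sv n) + tl (Suc (Suc n))" by (simp add: Fq_def)
    have f2: "ip (Suc n) (\<lambda>_. 1) (sv n) \<le> ip (Suc n) (\<lambda>_. 1) (sv (2*k))"
      using sv_anti by (intro ip_mono) (auto simp: k_def)
    have f3: "ip (Suc n) (\<lambda>_. 1) (sv (2*k)) + tl (Suc (Suc n)) = Fq (2*k)"
      by (rule Fq_eq[symmetric]) (auto simp: k_def)
    have f4: "Fq (2*k) = AA k" by (rule Fq_AA)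
    have f5: "AA k \<le> Cu * real k powr (-(b - 1) / 2)" using Cu k1 by simp
    have "n \<le> 3 * k" unfolding k_def using n by linarith
    hence "real n / 3 \<le> real k" by linarith
    hence f6: "real k powr (-(b - 1) / 2) \<le> (real n / 3) powr (-(b - 1) / 2)"
      using n b1 by (intro powr_mono2') auto
    have gen: "(x / 3) powr e = x powr e * 3 powr (-e)" for x e :: real
      by (simp add: powr_divide powr_minus_divide)
    have f7: "(real n / 3) powr (-(b - 1) / 2) = real n powr ((1 - b) / 2) * 3 powr ((b - 1) / 2)"
    proof -
      have h: "- ((1 - b) / 2) = (b - 1) / 2" "-(b - 1) / 2 = (1 - b) / 2" by (simp add: field_simps)+
      have "(real n / 3) powr ((1 - b) / 2) = real n powr ((1 - b) / 2) * 3 powr ((b - 1) / 2)"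
        using gen[of "real n" "(1 - b) / 2"] unfolding h(1) .
      thus ?thesis unfolding h(2) .
    qed
    have f9: "(3::real) powr ((b - 1) / 2) \<le> 3 powr 1" using b2 by (intro powr_mono) auto
    have e: "-(b - 1) / 2 = (1 - b) / 2" by simp
    define P where "P = real n powr ((1 - b) / 2)"
    have P0: "P \<ge> 0" by (simp add: P_def)
    have "real k powr (-(b - 1) / 2) \<le> P * 3 powr ((b - 1) / 2)"
      using f6 f7 unfolding P_def by simp
    also have "\<dots> \<le> P * 3" using f9 P0 by (intro mult_left_mono) auto
    finally have "real k powr (-(b - 1) / 2) \<le> P * 3" .
    hence "Cu * real k powr (-(b - 1) / 2) \<le> Cu * (P * 3)" using Cu0 by (intro mult_left_mono)
    thus ?thesis using f1 f2 f3 f4 f5 unfolding P_def by (simp add: algebra_simps)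
  qed
  thus ?thesis by blast
qed

lemma clamp_lip:
  fixes a a' c c' d :: real
  assumes "\<bar>a' - a\<bar> \<le> d" "\<bar>c' - c\<bar> \<le> d"
  shows "\<bar>max 0 (min 1 (min a' c')) - max 0 (min 1 (min a c))\<bar> \<le> d"
  using assms by (simp add: max_def min_def abs_le_iff split: if_splits) linarith?

definition tf :: "nat \<Rightarrow> nat \<Rightarrow> real" where
  "tf M n = max 0 (min 1 (min ((real n - real M) / real M) ((4 * real M - real n) / real M)))"

definition fq :: "nat \<Rightarrow> nat \<Rightarrow> nat \<Rightarrow> real" where "fq M i = (Qop ^^ i) (tf M)"

lemma fq0: "fq M 0 = tf M" by (simp add: fq_def)
lemma fqS: "fq M (Suc i) = Qop (fq M i)" by (simp add: fq_def)

lemma tf_bounds: "0 \<le> tf M n \<and> tf M n \<le> 1" by (simp add: tf_def)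

lemma tf_zero: assumes "M \<ge> 1" "n \<le> M \<or> n \<ge> 4 * M" shows "tf M n = 0"
proof -
  have Mp: "real M > 0" using assms by simp
  from assms(2) show ?thesis
  proof
    assume "n \<le> M"
    hence "(real n - real M) / real M \<le> 0" using Mp by (simp add: divide_nonpos_pos)
    thus ?thesis unfolding tf_def by simp
  next
    assume "n \<ge> 4 * M"
    hence "(4 * real M - real n) / real M \<le> 0" using Mp by (simp add: divide_nonpos_pos)
    thus ?thesis unfolding tf_def by simp
  qed
qed

lemma tf_one: assumes "M \<ge> 1" "2 * M \<le> n" "n \<le> 3 * M" shows "tf M n = 1"
proof -
  have Mp: "real M > 0" using assms by simp
  have "1 \<le> (real n - real M) / real M" "1 \<le> (4 * real M - real n) / real M"
    using assms Mp by (simp_all add: le_divide_eq)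
  thus ?thesis unfolding tf_def by simp
qed

lemma tf_lip: assumes "M \<ge> 1" shows "\<bar>tf M (Suc n) - tf M n\<bar> \<le> 1 / real M"
proof -
  have Mp: "real M > 0" using assms by simp
  show ?thesis unfolding tf_def
    by (rule clamp_lip) (use Mp in \<open>simp_all add: diff_divide_distrib[symmetric]\<close>)
qed

lemma fq_zero: "M \<ge> 1 \<Longrightarrow> n > 4 * M + i \<Longrightarrow> fq M i n = 0"
proof (induction i arbitrary: n)
  case 0 thus ?case by (simp add: fq0 tf_zero)
next
  case (Suc i)
  have "fq M i (n-1) = 0" "fq M i n = 0" "fq M i (Suc n) = 0" using Suc by auto
  moreover have "n \<ge> 2" using Suc by auto
  ultimately show ?case by (simp add: fqS Qop_def)
qed

lemma fq_bounds: "n \<ge> 1 \<Longrightarrow> 0 \<le> fq M i n \<and> fq M i n \<le> sv i n"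
proof (induction i arbitrary: n)
  case 0 thus ?case using tf_bounds by (simp add: fq0 sv0)
next
  case (Suc i)
  have "Qop (fq M i) n \<le> Qop (sv i) n" using Suc by (intro Qop_mono) auto
  moreover have "Qop (fq M i) n \<ge> 0" using Suc by (intro Qop_nonneg) auto
  ultimately show ?case by (simp add: fqS svS)
qed

lemma rev_fq_sv: "M \<ge> 1 \<Longrightarrow> N > 4 * M + i + m + 1 \<Longrightarrow> N > j + m \<Longrightarrow>
    ip N (fq M i) (sv (j + m)) = ip N (fq M (i + m)) (sv j)"
proof (induction m arbitrary: i)
  case 0 thus ?case by simp
next
  case (Suc m)
  have N1: "N \<ge> 1" using Suc by auto
  have z: "fq M i N = 0" "fq M i (Suc N) = 0" using Suc by (auto intro!: fq_zero)
  have "ip N (fq M i) (sv (j + Suc m)) = ip N (fq M i) (Qop (sv (j+m)))" by (simp add: svS)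
  also have "\<dots> = ip N (Qop (fq M i)) (sv (j+m))" using rev_id[OF N1, of "fq M i" "sv (j+m)"] z by simp
  also have "\<dots> = ip N (fq M (Suc i)) (sv (j+m))" by (simp add: fqS)
  also have "\<dots> = ip N (fq M (Suc i + m)) (sv j)" using Suc by (intro Suc.IH) auto
  finally show ?case by simp
qed

lemma rev_fq_fq: "M \<ge> 1 \<Longrightarrow> N > 4 * M + i + m + 1 \<Longrightarrow>
    ip N (fq M i) (fq M (j + m)) = ip N (fq M (i + m)) (fq M j)"
proof (induction m arbitrary: i)
  case 0 thus ?case by simp
next
  case (Suc m)
  have N1: "N \<ge> 1" using Suc by auto
  have z: "fq M i N = 0" "fq M i (Suc N) = 0" using Suc by (auto intro!: fq_zero)
  have "ip N (fq M i) (fq M (j + Suc m)) = ip N (fq M i) (Qop (fq M (j+m)))" by (simp add: fqS)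
  also have "\<dots> = ip N (Qop (fq M i)) (fq M (j+m))" using rev_id[OF N1, of "fq M i" "fq M (j+m)"] z by simp
  also have "\<dots> = ip N (fq M (Suc i)) (fq M (j+m))" by (simp add: fqS)
  also have "\<dots> = ip N (fq M (Suc i + m)) (fq M j)" using Suc by (intro Suc.IH) auto
  finally show ?case by simp
qed

lemma ip_sq: "ip N f f - 2 * ip N f g + ip N g g \<ge> 0"
proof -
  have "ip N f f - 2 * ip N f g + ip N g g = (\<Sum>n=1..N. pp n * (f n - g n)\<^sup>2)"
    unfolding ip_def by (simp add: sum_subtractf sum.distrib sum_distrib_left power2_eq_square algebra_simps)
  also have "\<dots> \<ge> 0" using pp_nonneg by (intro sum_nonneg mult_nonneg_nonneg) auto
  finally show ?thesis .
qed

lemma ip_comm: "ip N f g = ip N g f" unfolding ip_def by (simp add: mult.commute mult.left_commute)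

lemma Dir_tf: assumes "M \<ge> 1" shows "Dir N (tf M) \<le> 3 * real M powr (-b) / real M"
proof -
  have Mp: "real M > 0" using assms by simp
  have t1: "tf M 1 = 0" using assms by (intro tf_zero) auto
  have tm: "cc k * (tf M (Suc k) - tf M k)\<^sup>2 \<le> (if M \<le> k \<and> k < 4 * M then real M powr (-b) / (real M)\<^sup>2 else 0)"
    if k: "k \<ge> 1" for k
  proof (cases "M \<le> k \<and> k < 4 * M")
    case True
    have "cc k \<le> cc M" using True assms by (intro cc_anti) auto
    moreover have "(tf M (Suc k) - tf M k)\<^sup>2 \<le> (1 / real M)\<^sup>2"
      using tf_lip[OF assms, of k] by (simp add: abs_le_square_iff[symmetric])
    ultimately have "cc k * (tf M (Suc k) - tf M k)\<^sup>2 \<le> cc M * (1 / real M)\<^sup>2"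
      using cc_nonneg by (intro mult_mono) auto
    thus ?thesis using True by (simp add: cc_def power_divide)
  next
    case False
    hence "tf M (Suc k) = 0 \<and> tf M k = 0" using assms by (auto intro!: tf_zero)
    thus ?thesis using False by simp
  qed
  have "(\<Sum>k=1..<N. cc k * (tf M (Suc k) - tf M k)\<^sup>2)
      \<le> (\<Sum>k=1..<N. (if M \<le> k \<and> k < 4 * M then real M powr (-b) / (real M)\<^sup>2 else 0))"
    using tm by (intro sum_mono) auto
  also have "\<dots> \<le> (\<Sum>k=M..<4*M. real M powr (-b) / (real M)\<^sup>2)"
  proof -
    have "(\<Sum>k=1..<N. (if M \<le> k \<and> k < 4 * M then real M powr (-b) / (real M)\<^sup>2 else 0))
        = (\<Sum>k\<in>{1..<N} \<inter> {M..<4*M}. real M powr (-b) / (real M)\<^sup>2)"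
      by (simp add: sum.If_cases Int_def conj_commute)
    also have "\<dots> \<le> (\<Sum>k=M..<4*M. real M powr (-b) / (real M)\<^sup>2)"
      by (intro sum_mono2) auto
    finally show ?thesis .
  qed
  also have "\<dots> = 3 * real M powr (-b) / real M" using Mp by (simp add: power2_eq_square)
  finally show ?thesis unfolding Dir_def using t1 by simp
qed

lemma b0_tf: assumes "M \<ge> 1" "N \<ge> 3 * M" shows "ip N (tf M) (tf M) \<ge> 2 / 9 * real M * real M powr (-b)"
proof -
  have "ip N (tf M) (tf M) \<ge> (\<Sum>n=2*M..3*M. pp n * tf M n * tf M n)"
    unfolding ip_def using assms pp_nonneg tf_bounds by (intro sum_mono2) (auto intro!: mult_nonneg_nonneg)
  also have "(\<Sum>n=2*M..3*M. pp n * tf M n * tf M n) = (\<Sum>n=2*M..3*M. pp n)"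
    using assms by (intro sum.cong) (auto simp: tf_one)
  also have "(\<Sum>n=2*M..3*M. pp n) \<ge> (\<Sum>n=2*M..3*M. 2 * cc (3 * M))"
  proof (intro sum_mono)
    fix n assume n: "n \<in> {2*M..3*M}"
    have "cc (3*M) \<le> cc n" using n assms by (intro cc_anti) auto
    thus "2 * cc (3 * M) \<le> pp n" using cc_nonneg[of "n-1"] by (simp add: pp_def)
  qed
  also have "(\<Sum>n=2*M..3*M. 2 * cc (3 * M)) = (real M + 1) * (2 * cc (3 * M))"
    using assms by (simp add: of_nat_diff)
  also have "cc (3 * M) = 3 powr (-b) * real M powr (-b)" by (simp add: cc_def powr_mult)
  also have "(real M + 1) * (2 * (3 powr (-b) * real M powr (-b))) \<ge> 2 / 9 * real M * real M powr (-b)"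
  proof -
    have "3 powr (-b) \<ge> (3::real) powr (-2)" using b2 by (intro powr_mono) auto
    hence "3 powr (-b) \<ge> (1/9::real)" by (simp add: powr_minus)
    moreover have "real M powr (-b) \<ge> 0" by simp
    ultimately have "(real M + 1) * (2 * (3 powr (-b) * real M powr (-b))) \<ge> real M * (2 * ((1/9) * real M powr (-b)))"
      by (intro mult_mono) auto
    thus ?thesis by simp
  qed
  finally show ?thesis by simp
qed

lemma bq_conv:
  assumes M: "M \<ge> 1" and N: "N > 4 * M + i + 3"
  shows "ip N (fq M i) (fq M i) - 2 * ip N (fq M (Suc i)) (fq M (Suc i)) + ip N (fq M (Suc (Suc i))) (fq M (Suc (Suc i))) \<ge> 0"
proof -
  have "ip N (fq M i) (fq M (Suc i + 1)) = ip N (fq M (i + 1)) (fq M (Suc i))"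
    using M N by (intro rev_fq_fq) auto
  hence "ip N (fq M i) (fq M (Suc (Suc i))) = ip N (fq M (Suc i)) (fq M (Suc i))" by simp
  thus ?thesis using ip_sq[of N "fq M i" "fq M (Suc (Suc i))"] by simp
qed

lemma bq_lin:
  assumes M: "M \<ge> 1" and N: "N > 4 * M + j + 3"
  shows "ip N (fq M j) (fq M j) \<ge> ip N (fq M 0) (fq M 0) - real j * (ip N (fq M 0) (fq M 0) - ip N (fq M 1) (fq M 1))"
proof -
  define bq where "bq i = ip N (fq M i) (fq M i)" for i
  define d where "d i = bq i - bq (Suc i)" for i
  have dd: "d i \<le> d 0" if "i \<le> j" for i
    using that
  proof (induction i)
    case 0 thus ?case by simp
  next
    case (Suc i)
    have Ni: "N > 4 * M + i + 3" using N Suc by simp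
    have "d (Suc i) \<le> d i" using bq_conv[OF M Ni] by (simp add: d_def bq_def)
    thus ?case using Suc by simp
  qed
  have "bq i \<ge> bq 0 - real i * d 0" if "i \<le> j" for i
    using that
  proof (induction i)
    case 0 thus ?case by simp
  next
    case (Suc i)
    have "bq (Suc i) = bq i - d i" by (simp add: d_def)
    moreover have "d i \<le> d 0" using dd Suc by simp
    ultimately show ?case using Suc by (simp add: algebra_simps)
  qed
  thus ?thesis by (simp add: bq_def d_def)
qed

lemma d0_bound:
  assumes M: "M \<ge> 1" and N: "N > 4 * M + 1"
  shows "ip N (fq M 0) (fq M 0) - ip N (fq M 1) (fq M 1) \<le> 2 * Dir N (tf M)"
proof -
  have N1: "N \<ge> 1" using N by simp
  have z: "tf M N = 0" using M N by (intro tf_zero) auto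
  have "ip N (tf M) (tf M) - ip N (tf M) (Qop (tf M)) = Dir N (tf M)"
    using dir_id[OF N1, of "tf M"] z by simp
  moreover have "ip N (tf M) (tf M) - 2 * ip N (tf M) (Qop (tf M)) + ip N (Qop (tf M)) (Qop (tf M)) \<ge> 0"
    by (rule ip_sq)
  ultimately show ?thesis by (simp add: fq0 fqS[of M 0, simplified fq0])
qed

lemma lower_core: assumes j: "j \<ge> 1"
  shows "\<exists>N0. \<forall>N\<ge>N0. ip N (\<lambda>_. 1) (sv (2 * j)) \<ge> 1 / 90 * real j powr ((1 - b) / 2)"
proof -
  define M where "M = nat (ceiling (sqrt (54 * real j))) + 1"
  have M1: "M \<ge> 1" by (simp add: M_def)
  have Mp: "real M > 0" using M1 by simp
  have Msq: "(real M)\<^sup>2 \<ge> 54 * real j"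
  proof -
    have "real M \<ge> sqrt (54 * real j)" unfolding M_def by linarith
    hence "(real M)\<^sup>2 \<ge> (sqrt (54 * real j))\<^sup>2" by (intro power_mono) auto
    thus ?thesis by simp
  qed
  have Mup: "real M \<le> 10 * sqrt (real j)"
  proof -
    have "sqrt (54 * real j) \<ge> 0" by simp
    hence "real M \<le> sqrt (54 * real j) + 2" unfolding M_def by linarith
    also have "sqrt (54 * real j) = sqrt 54 * sqrt (real j)" by (simp add: real_sqrt_mult)
    also have "sqrt (54::real) \<le> 8" by (rule real_le_lsqrt) auto
    hence "sqrt 54 * sqrt (real j) \<le> 8 * sqrt (real j)" by (intro mult_right_mono) auto
    moreover have "1 \<le> sqrt (real j)" using j by simp
    ultimately show ?thesis by linarith
  qed
  show ?thesis
  proof (intro exI allI impI)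
    fix N assume N: "N \<ge> 4 * M + 2 * j + 4"
    have e1: "ip N (\<lambda>_. 1) (sv (2 * j)) \<ge> ip N (tf M) (sv (j + j))"
    proof (intro ip_mono)
      fix n :: nat assume n: "1 \<le> n" "n \<le> N"
      show "tf M n * sv (j + j) n \<le> 1 * sv (2 * j) n"
        using tf_bounds[of M n] sv_bounds[OF n(1), of "2*j"] mult_right_mono[of "tf M n" 1 "sv (j+j) n"]
        by (simp add: mult_2)
    qed
    have e2: "ip N (tf M) (sv (j + j)) = ip N (fq M j) (sv j)"
    proof -
      have "ip N (fq M 0) (sv (j + j)) = ip N (fq M (0 + j)) (sv j)"
        by (rule rev_fq_sv[OF M1]) (use N in auto)
      thus ?thesis by (simp add: fq0)
    qed
    have e3: "ip N (fq M j) (sv j) \<ge> ip N (fq M j) (fq M j)"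
    proof (intro ip_mono)
      fix n :: nat assume n: "1 \<le> n" "n \<le> N"
      show "fq M j n * fq M j n \<le> fq M j n * sv j n" using fq_bounds[OF n(1), of M j] by (simp add: mult_left_mono)
    qed
    have e4: "ip N (fq M j) (fq M j) \<ge> ip N (fq M 0) (fq M 0) - real j * (ip N (fq M 0) (fq M 0) - ip N (fq M 1) (fq M 1))"
      using bq_lin[OF M1, of j N] N by simp
    have e5: "ip N (fq M 0) (fq M 0) - ip N (fq M 1) (fq M 1) \<le> 2 * (3 * real M powr (-b) / real M)"
      using d0_bound[OF M1, of N] Dir_tf[OF M1, of N] N by simp
    have e6: "ip N (fq M 0) (fq M 0) \<ge> 2 / 9 * real M * real M powr (-b)"
      using b0_tf[OF M1, of N] N by (simp add: fq0)
    define P where "P = real M powr (-b)"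
    have P0: "P > 0" using Mp by (simp add: P_def)
    have "ip N (\<lambda>_. 1) (sv (2 * j)) \<ge> 2 / 9 * real M * P - real j * (2 * (3 * P / real M))"
    proof -
      have "real j * (ip N (fq M 0) (fq M 0) - ip N (fq M 1) (fq M 1)) \<le> real j * (2 * (3 * P / real M))"
        using e5 unfolding P_def by (intro mult_left_mono) auto
      thus ?thesis using e1 e2 e3 e4 e6 unfolding P_def by linarith
    qed
    moreover have "real j * (2 * (3 * P / real M)) \<le> 1 / 9 * real M * P"
    proof -
      have "real j * 6 \<le> (real M)\<^sup>2 / 9" using Msq by simp
      hence "real j * 6 * P \<le> (real M)\<^sup>2 / 9 * P" using P0 by (intro mult_right_mono) auto
      thus ?thesis using Mp by (simp add: field_simps power2_eq_square)
    qed
    ultimately have low: "ip N (\<lambda>_. 1) (sv (2 * j)) \<ge> 1 / 9 * (real M * P)" by simp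
    have "real M * P = real M powr (1 - b)" unfolding P_def using Mp by (simp add: powr_diff powr_minus divide_inverse)
    also have "real M powr (1 - b) \<ge> (10 * sqrt (real j)) powr (1 - b)"
      using Mup Mp b1 by (intro powr_mono2') auto
    also have "(10 * sqrt (real j)) powr (1 - b) = 10 powr (1 - b) * real j powr ((1 - b) / 2)"
    proof -
      have "sqrt (real j) powr (1 - b) = real j powr ((1 - b) / 2)"
        using j by (simp add: sqrt_def root_powr_inverse powr_powr)
      thus ?thesis by (simp add: powr_mult)
    qed
    also have "10 powr (1 - b) \<ge> (10::real) powr (-1)" using b2 by (intro powr_mono) auto
    hence "10 powr (1 - b) * real j powr ((1 - b) / 2) \<ge> 1 / 10 * real j powr ((1 - b) / 2)"
      by (intro mult_right_mono) (auto simp: powr_minus)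
    finally have "real M * P \<ge> 1 / 10 * real j powr ((1 - b) / 2)" .
    thus "ip N (\<lambda>_. 1) (sv (2 * j)) \<ge> 1 / 90 * real j powr ((1 - b) / 2)" using low by simp
  qed
qed

definition ev :: "nat \<Rightarrow> real" where "ev n = (if even n then 1 else 0)"

lemma Qop_ev: assumes "n \<ge> 1" shows "Qop ev n = 1/2"
proof (cases "n = 1")
  case True thus ?thesis by (simp add: Qop_def ev_def)
next
  case False
  hence n2: "n \<ge> 2" using assms by simp
  have pp: "pp n = 2 * (cc (n-1) + cc n)" by (simp add: pp_def)
  have pos: "cc (n-1) + cc n > 0" using pp_pos[of n] n2 by (simp add: pp_def)
  show ?thesis
  proof (cases "even n")
    case True
    hence "odd (n-1)" "odd (Suc n)" using n2 by auto
    thus ?thesis using True n2 pos by (simp add: Qop_def ev_def pp)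
  next
    case False
    hence "even (n-1)" "even (Suc n)" using n2 by auto
    thus ?thesis using False n2 pos by (simp add: Qop_def ev_def pp algebra_simps)
  qed
qed

lemma ip_cong: "(\<And>n. 1 \<le> n \<Longrightarrow> n \<le> N \<Longrightarrow> f n = f' n) \<Longrightarrow> ip N f g = ip N f' g"
  unfolding ip_def by (intro sum.cong) auto

lemma ip_half: "ip N (\<lambda>_. 1/2) g = 1/2 * ip N (\<lambda>_. 1) g"
  unfolding ip_def by (simp add: sum_distrib_left mult.commute mult.left_commute)

lemma ev_id: assumes N: "N \<ge> 1" "even N" and g: "g (Suc N) \<ge> 0"
  shows "ip N ev (Qop g) \<ge> 1/2 * ip N (\<lambda>_. 1) g"
proof -
  have "ip N ev (Qop g) = ip N (Qop ev) g + cc N * (ev N * g (Suc N) - ev (Suc N) * g N)"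
    using rev_id[OF N(1), of ev g] by simp
  also have "ip N (Qop ev) g = ip N (\<lambda>_. 1/2) g" using Qop_ev by (intro ip_cong) auto
  also have "ev N * g (Suc N) - ev (Suc N) * g N = g (Suc N)" using N by (simp add: ev_def)
  finally show ?thesis using cc_nonneg[of N] g by (simp add: ip_half)
qed

lemma lower_final: "\<exists>cl>0. \<forall>n\<ge>2. \<exists>N0. \<forall>N\<ge>N0. even N \<longrightarrow> ip N ev (sv n) \<ge> cl * real n powr ((1 - b) / 2)"
proof (intro exI[of _ "1/180"] conjI allI impI)
  fix n :: nat assume n: "n \<ge> 2"
  define j where "j = n div 2"
  have j1: "j \<ge> 1" using n by (simp add: j_def)
  obtain N0 where N0: "\<And>N. N \<ge> N0 \<Longrightarrow> ip N (\<lambda>_. 1) (sv (2 * j)) \<ge> 1 / 90 * real j powr ((1 - b) / 2)"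
    using lower_core[OF j1] by blast
  show "\<exists>N0. \<forall>N\<ge>N0. even N \<longrightarrow> ip N ev (sv n) \<ge> 1/180 * real n powr ((1 - b) / 2)"
  proof (intro exI[of _ "max N0 1"] allI impI)
    fix N assume N: "max N0 1 \<le> N" "even N"
    have N1: "N \<ge> 1" using N by simp
    have sn: "sv n = Qop (sv (n-1))" using n svS[of "n-1"] by simp
    have "ip N ev (sv n) \<ge> 1/2 * ip N (\<lambda>_. 1) (sv (n-1))"
      unfolding sn using sv_bounds[of "Suc N" "n-1"] by (intro ev_id N1 N(2)) auto
    moreover have "ip N (\<lambda>_. 1) (sv (n-1)) \<ge> ip N (\<lambda>_. 1) (sv (2 * j))"
      using sv_anti by (intro ip_mono) (auto simp: j_def)
    moreover have "ip N (\<lambda>_. 1) (sv (2 * j)) \<ge> 1 / 90 * real j powr ((1 - b) / 2)" using N by (intro N0) auto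
    moreover have "real j powr ((1 - b) / 2) \<ge> real n powr ((1 - b) / 2)"
      using j1 b1 by (intro powr_mono2') (auto simp: j_def)
    ultimately show "ip N ev (sv n) \<ge> 1/180 * real n powr ((1 - b) / 2)" by simp
  qed
qed simp

end


context bw
begin

lemma cc_int: "k \<ge> 0 \<Longrightarrow> real_of_int k powr (-b) = cc (nat k)"
  by (simp add: cc_def)

lemma cond_sym: "cond b (-x) (-y) = cond b x y"
  unfolding cond_def by (auto simp: abs_minus_commute algebra_simps)

lemma cond_zero: assumes "y \<notin> {x-1, x, x+1, -x}" shows "cond b x y = 0"
  using assms unfolding cond_def by (auto simp: abs_if split: if_splits)

lemma cond_up: assumes "x \<ge> 1" shows "cond b x (x+1) = cc (nat x)"
  using assms unfolding cond_def by (simp add: cc_int)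

lemma cond_down: assumes "x \<ge> 2" shows "cond b x (x-1) = cc (nat x - 1)"
proof -
  have "real_of_int (x - 1) powr (-b) = cc (nat (x-1))" using assms by (intro cc_int) auto
  moreover have "nat (x - 1) = nat x - 1" using assms by auto
  ultimately show ?thesis using assms unfolding cond_def by simp
qed

lemma cond_diag: assumes "x \<ge> 2" shows "cond b x x = cc (nat x - 1) + cc (nat x)"
proof -
  have "real_of_int (x - 1) powr (-b) = cc (nat (x-1))" using assms by (intro cc_int) auto
  moreover have "nat (x - 1) = nat x - 1" using assms by auto
  ultimately show ?thesis using assms unfolding cond_def by (simp add: cc_int)
qed

lemma cond_zero2: assumes "x \<ge> 2" "y \<notin> {x-1, x, x+1}" shows "cond b x y = 0"
  using assms unfolding cond_def by (auto simp: abs_if split: if_splits)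

lemma cond_zero1: assumes "y \<notin> {-1, 1, 2}" shows "cond b 1 y = 0"
  using assms unfolding cond_def by (auto simp: abs_if split: if_splits)

lemma cond_1: "cond b 1 1 = 1/2" "cond b 1 (-1) = 1/2" "cond b 1 2 = 1" "cond b 1 0 = 0"
proof -
  show "cond b 1 1 = 1/2" unfolding cond_def by simp
  show "cond b 1 (-1) = 1/2" unfolding cond_def by simp
  show "cond b 1 0 = 0" unfolding cond_def by simp
  have "min \<bar>1::int\<bar> \<bar>2\<bar> = 1" by simp
  thus "cond b 1 2 = 1" unfolding cond_def by simp
qed

lemma infsum_fin: "finite S \<Longrightarrow> (\<And>y. y \<notin> S \<Longrightarrow> f y = 0) \<Longrightarrow> infsum f UNIV = sum f S"
  by (subst infsum_cong_neutral[where T = S and g = f]) auto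

lemma piw_pos_formula: assumes "x \<ge> 1" shows "piw b x = pp (nat x)"
proof (cases "x = 1")
  case True
  have "piw b 1 = sum (cond b 1) {-1, 1, 2}"
    unfolding piw_def by (rule infsum_fin) (auto intro!: cond_zero1)
  also have "\<dots> = 2" by (simp add: cond_1)
  finally show ?thesis using True by simp
next
  case False
  hence x2: "x \<ge> 2" using assms by simp
  have "piw b x = sum (cond b x) {x-1, x, x+1}"
    unfolding piw_def using x2 by (intro infsum_fin) (auto intro!: cond_zero2)
  also have "\<dots> = cond b x (x-1) + cond b x x + cond b x (x+1)" using x2 by simp
  also have "\<dots> = pp (nat x)" using x2 by (simp add: cond_up cond_down cond_diag pp_def)
  finally show ?thesis .
qed

lemma piw_sym: "piw b (-x) = piw b x"
proof -
  have "piw b (-x) = infsum (\<lambda>y. cond b (-x) y) (uminus ` UNIV)" by (simp add: piw_def)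
  also have "\<dots> = infsum ((\<lambda>y. cond b (-x) y) \<circ> uminus) UNIV" by (rule infsum_reindex) auto
  also have "\<dots> = piw b x" by (simp add: piw_def o_def cond_sym)
  finally show ?thesis .
qed

lemma piw_formula: "piw b x = pp (nat \<bar>x\<bar>)"
proof -
  consider "x \<ge> 1" | "x = 0" | "x \<le> -1" by linarith
  thus ?thesis
  proof cases
    case 1 thus ?thesis by (simp add: piw_pos_formula)
  next
    case 2 thus ?thesis by (simp add: piw_def cond_def pp_def)
  next
    case 3 thus ?thesis using piw_pos_formula[of "-x"] piw_sym[of "-x"] by simp
  qed
qed

lemma trans_sym: "trans b (-x) (-y) = trans b x y"
  by (simp add: trans_def piw_sym cond_sym)


lemma piw_pos: "x \<noteq> 0 \<Longrightarrow> piw b x > 0"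
  by (simp add: piw_formula pp_pos)

lemma Qop_affine: assumes "n \<ge> 2" shows "Qop (\<lambda>m. c + d * f m) n = c + d * Qop f n"
proof -
  have "pp n > 0" using pp_pos[of n] assms by simp
  thus ?thesis using assms unfolding Qop_def by (simp add: pp_def field_simps)
qed

lemma step_pos:
  assumes x: "x \<ge> 1" and gp: "\<And>y. y > 0 \<Longrightarrow> g y = u (nat y)" and gn: "\<And>y. y < 0 \<Longrightarrow> g y = v (nat (-y))"
  shows "infsum (\<lambda>y. trans b x y * g y) UNIV = (if x = 1 then (v 1 + u 1 + 2 * u 2) / 4 else Qop u (nat x))"
proof (cases "x = 1")
  case True
  have p1: "piw b 1 = 2" using piw_pos_formula[of 1] by simp
  have "infsum (\<lambda>y. trans b 1 y * g y) UNIV = sum (\<lambda>y. trans b 1 y * g y) {-1, 1, 2}"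
    by (rule infsum_fin) (auto simp: trans_def cond_zero1)
  also have "\<dots> = (v 1 + u 1 + 2 * u 2) / 4"
    using gp[of 1] gp[of 2] gn[of "-1"] by (simp add: trans_def p1 cond_1)
  finally show ?thesis using True by simp
next
  case False
  hence x2: "x \<ge> 2" using x by simp
  define a where "a = nat x"
  have a2: "a \<ge> 2" using x2 by (simp add: a_def)
  have px: "piw b x = pp a" using x by (simp add: piw_pos_formula a_def)
  have "infsum (\<lambda>y. trans b x y * g y) UNIV = sum (\<lambda>y. trans b x y * g y) {x-1, x, x+1}"
    using x2 by (intro infsum_fin) (auto simp: trans_def cond_zero2)
  also have "\<dots> = trans b x (x-1) * g (x-1) + trans b x x * g x + trans b x (x+1) * g (x+1)"
    using x2 by simp
  also have "g (x-1) = u (a-1)" using x2 gp[of "x-1"] by (simp add: a_def nat_diff_distrib)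
  also have "g x = u a" using x2 gp[of x] by (simp add: a_def)
  also have "g (x+1) = u (Suc a)" using x2 gp[of "x+1"] by (simp add: a_def nat_add_distrib)
  also have "trans b x (x-1) * u (a - 1) + trans b x x * u a + trans b x (x + 1) * u (Suc a) = Qop u a"
    using x2 a2 pp_pos[of a] unfolding trans_def Qop_def
    by (simp add: px cond_up cond_down cond_diag a_def[symmetric] add_divide_distrib; simp add: field_simps)
  finally show ?thesis using False by (simp add: a_def)
qed

lemma step_neg:
  assumes x: "x \<le> -1" and gp: "\<And>y. y > 0 \<Longrightarrow> g y = u (nat y)" and gn: "\<And>y. y < 0 \<Longrightarrow> g y = v (nat (-y))"
  shows "infsum (\<lambda>y. trans b x y * g y) UNIV = (if x = -1 then (u 1 + v 1 + 2 * v 2) / 4 else Qop v (nat (-x)))"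
proof -
  have "infsum (\<lambda>y. trans b x y * g y) UNIV = infsum (\<lambda>y. trans b x y * g y) (uminus ` UNIV)" by simp
  also have "\<dots> = infsum ((\<lambda>y. trans b x y * g y) \<circ> uminus) UNIV" by (rule infsum_reindex) auto
  also have "\<dots> = infsum (\<lambda>y. trans b (-x) y * g (-y)) UNIV"
    using trans_sym[of "-x"] by (simp add: o_def)
  also have "\<dots> = (if -x = 1 then (u 1 + v 1 + 2 * v 2) / 4 else Qop v (nat (-x)))"
    using x gp gn by (intro step_pos) auto
  finally show ?thesis by (auto split: if_splits)
qed

lemma trans0: "trans b 0 y = 0" by (simp add: trans_def)

definition HH :: "nat \<Rightarrow> int \<Rightarrow> real" where
  "HH t x = (if x > 0 then 1/4 + sv t (nat x) / 4 else if x < 0 then 1/4 - sv t (nat (-x)) / 4 else 0)"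

lemma hit_closed: "hitP b evenPos (Suc t) x = HH t x"
proof (induction t arbitrary: x)
  case 0
  have g: "hitP b evenPos 0 y = (if y > 0 then ev (nat y) else if y < 0 then 0 else 0)" for y
    by (auto simp: evenPos_def ev_def even_nat_iff)
  consider "x = 1" | "x \<ge> 2" | "x = -1" | "x \<le> -2" | "x = 0" by linarith
  thus ?case
  proof cases
    case 1
    have "hitP b evenPos (Suc 0) x = (0 + ev 1 + 2 * ev 2) / 4"
      using step_pos[of x "hitP b evenPos 0" ev "\<lambda>_. 0"] 1 g by simp
    thus ?thesis using 1 by (simp add: HH_def ev_def sv0)
  next
    case 2
    have "hitP b evenPos (Suc 0) x = Qop ev (nat x)"
      using step_pos[of x "hitP b evenPos 0" ev "\<lambda>_. 0"] 2 g by simp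
    thus ?thesis using 2 Qop_ev[of "nat x"] by (simp add: HH_def sv0)
  next
    case 3
    have "hitP b evenPos (Suc 0) x = (ev 1 + 0 + 2 * 0) / 4"
      using step_neg[of x "hitP b evenPos 0" ev "\<lambda>_. 0"] 3 g by simp
    thus ?thesis using 3 by (simp add: HH_def ev_def sv0)
  next
    case 4
    have "hitP b evenPos (Suc 0) x = Qop (\<lambda>_. 0) (nat (-x))"
      using step_neg[of x "hitP b evenPos 0" ev "\<lambda>_. 0"] 4 g by simp
    thus ?thesis using 4 Qop_const[of "nat (-x)" 0] by (simp add: HH_def sv0)
  next
    case 5 thus ?thesis by (simp add: HH_def trans0)
  qed
next
  case (Suc t)
  define u where "u n = 1/4 + 1/4 * sv t n" for n
  define v where "v n = 1/4 + (-1/4) * sv t n" for n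
  have gp: "hitP b evenPos (Suc t) y = u (nat y)" if "y > 0" for y using that Suc.IH by (simp add: HH_def u_def)
  have gn: "hitP b evenPos (Suc t) y = v (nat (-y))" if "y < 0" for y using that Suc.IH by (simp add: HH_def v_def)
  have hS: "hitP b evenPos (Suc (Suc t)) x = infsum (\<lambda>y. trans b x y * hitP b evenPos (Suc t) y) UNIV" by simp
  consider "x = 1" | "x \<ge> 2" | "x = -1" | "x \<le> -2" | "x = 0" by linarith
  thus ?case
  proof cases
    case 1
    thus ?thesis using step_pos[of x "hitP b evenPos (Suc t)" u v, OF _ gp gn] hS
      by (simp add: HH_def u_def v_def svS Qop_def)
  next
    case 2
    have "hitP b evenPos (Suc (Suc t)) x = Qop u (nat x)"
      using step_pos[of x "hitP b evenPos (Suc t)" u v, OF _ gp gn] hS 2 by simp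
    also have "\<dots> = 1/4 + 1/4 * Qop (sv t) (nat x)" unfolding u_def using 2 by (intro Qop_affine) auto
    finally show ?thesis using 2 by (simp add: HH_def svS)
  next
    case 3
    thus ?thesis using step_neg[of x "hitP b evenPos (Suc t)" u v, OF _ gp gn] hS
      by (simp add: HH_def u_def v_def svS Qop_def)
  next
    case 4
    have "hitP b evenPos (Suc (Suc t)) x = Qop v (nat (-x))"
      using step_neg[of x "hitP b evenPos (Suc t)" u v, OF _ gp gn] hS 4 by simp
    also have "\<dots> = 1/4 + (-1/4) * Qop (sv t) (nat (-x))" unfolding v_def using 4 by (intro Qop_affine) auto
    finally show ?thesis using 4 by (simp add: HH_def svS)
  next
    case 5 thus ?thesis by (simp add: HH_def trans0)
  qed
qed

lemma stay_out: "y \<notin> evenPos \<Longrightarrow> stayP b evenPos t y = 0"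
  by (cases t) auto

lemma stay_closed: "x \<in> evenPos \<Longrightarrow> stayP b evenPos t x = (1/2) ^ t"
proof (induction t arbitrary: x)
  case 0 thus ?case by simp
next
  case (Suc t)
  have x2: "x \<ge> 2" and ex: "even x" using Suc.prems by (auto simp: evenPos_def)
  define u where "u n = 0 + (1/2)^t * ev n" for n
  have gp: "stayP b evenPos t y = u (nat y)" if "y > 0" for y
  proof (cases "y \<in> evenPos")
    case True thus ?thesis using Suc.IH by (simp add: u_def ev_def evenPos_def even_nat_iff)
  next
    case False thus ?thesis using that stay_out by (simp add: u_def ev_def evenPos_def even_nat_iff)
  qed
  have gn: "stayP b evenPos t y = (\<lambda>_. 0) (nat (-y))" if "y < 0" for y
    using that stay_out by (simp add: evenPos_def)
  have "stayP b evenPos (Suc t) x = infsum (\<lambda>y. trans b x y * stayP b evenPos t y) UNIV"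
    using Suc.prems by simp
  also have "\<dots> = Qop u (nat x)" using step_pos[of x "stayP b evenPos t" u, OF _ gp gn] x2 by simp
  also have "\<dots> = 0 + (1/2)^t * Qop ev (nat x)" unfolding u_def using x2 by (intro Qop_affine) auto
  also have "Qop ev (nat x) = 1/2" using x2 by (intro Qop_ev) auto
  finally show ?case by simp
qed


lemma psum_piw: assumes "finite F" shows "sum (piw b) F \<le> 2 * Ptot"
proof -
  let ?P = "F \<inter> {x. x > 0}" and ?N = "F \<inter> {x. x \<le> 0}"
  have "sum (piw b) F = sum (piw b) ?P + sum (piw b) ?N"
    using assms by (subst sum.union_disjoint[symmetric]) (auto intro: sum.cong)
  also have "sum (piw b) ?P = sum pp ((\<lambda>x. nat \<bar>x\<bar>) ` ?P)"
  proof -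
    have "inj_on (\<lambda>x. nat \<bar>x\<bar>) ?P" by (auto simp: inj_on_def)
    hence "sum pp ((\<lambda>x. nat \<bar>x\<bar>) ` ?P) = sum (pp \<circ> (\<lambda>x. nat \<bar>x\<bar>)) ?P" by (rule sum.reindex)
    also have "\<dots> = sum (piw b) ?P" unfolding o_def piw_formula ..
    finally show ?thesis by simp
  qed
  also have "\<dots> \<le> Ptot" using assms by (intro psum_le_Ptot) auto
  also have "sum (piw b) ?N = sum pp ((\<lambda>x. nat \<bar>x\<bar>) ` ?N)"
  proof -
    have "inj_on (\<lambda>x. nat \<bar>x\<bar>) ?N" by (auto simp: inj_on_def)
    hence "sum pp ((\<lambda>x. nat \<bar>x\<bar>) ` ?N) = sum (pp \<circ> (\<lambda>x. nat \<bar>x\<bar>)) ?N" by (rule sum.reindex)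
    also have "\<dots> = sum (piw b) ?N" unfolding o_def piw_formula ..
    finally show ?thesis by simp
  qed
  also have "\<dots> \<le> Ptot" using assms by (intro psum_le_Ptot) auto
  finally show ?thesis by simp
qed

lemma piw_nonneg: "piw b x \<ge> 0" by (simp add: piw_formula pp_nonneg)

lemma summ_dom: assumes "\<And>x. x \<in> A \<Longrightarrow> 0 \<le> f x \<and> f x \<le> piw b x" shows "f summable_on A"
proof (rule nonneg_bdd_above_summable_on)
  show "\<And>x. x \<in> A \<Longrightarrow> 0 \<le> f x" using assms by auto
  show "bdd_above (sum f ` {F. F \<subseteq> A \<and> finite F})"
  proof (rule bdd_aboveI)
    fix s assume "s \<in> sum f ` {F. F \<subseteq> A \<and> finite F}"
    then obtain F where F: "F \<subseteq> A" "finite F" "s = sum f F" by auto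
    have "sum f F \<le> sum (piw b) F" using F assms by (intro sum_mono) auto
    also have "\<dots> \<le> 2 * Ptot" by (rule psum_piw[OF F(2)])
    finally show "s \<le> 2 * Ptot" using F by simp
  qed
qed

lemma piw_summ: "piw b summable_on A" using piw_nonneg by (intro summ_dom) auto

definition Zall :: real where "Zall = infsum (piw b) (UNIV - {0})"

lemma infsum_ge_fin: fixes f :: "'a \<Rightarrow> real" assumes "f summable_on A" "finite F" "F \<subseteq> A" "\<And>x. x \<in> A \<Longrightarrow> f x \<ge> 0"
  shows "sum f F \<le> infsum f A"
proof -
  have "infsum f F \<le> infsum f A" by (rule infsum_mono_neutral) (use assms in auto)
  thus ?thesis using assms by simp
qed

definition Od :: "int set" where "Od = {x. x > 0 \<and> odd x}"

lemma cc_nat_summ: "(\<lambda>x. cc (nat x)) summable_on {x. x \<ge> 0}"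
proof (rule summ_dom)
  fix x :: int assume x: "x \<in> {x. x \<ge> 0}"
  hence ax: "\<bar>x\<bar> = x" by simp
  show "0 \<le> cc (nat x) \<and> cc (nat x) \<le> piw b x"
    using cc_nonneg[of "nat x"] cc_nonneg[of "nat x - 1"] by (simp add: piw_formula pp_def ax)
qed

lemma cc_nat1_summ: "(\<lambda>x. cc (nat x - 1)) summable_on {x. x > 0}"
proof (rule summ_dom)
  fix x :: int assume x: "x \<in> {x. x > 0}"
  hence ax: "\<bar>x\<bar> = x" by simp
  show "0 \<le> cc (nat x - 1) \<and> cc (nat x - 1) \<le> piw b x"
    using cc_nonneg[of "nat x"] cc_nonneg[of "nat x - 1"] by (simp add: piw_formula pp_def ax)
qed

lemma piw_split: assumes "A \<subseteq> {x. x > 0}"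
  shows "infsum (piw b) A = 2 * infsum (\<lambda>x. cc (nat x - 1)) A + 2 * infsum (\<lambda>x. cc (nat x)) A"
proof -
  have s1: "(\<lambda>x. cc (nat x - 1)) summable_on A" using assms by (rule summable_on_subset[OF cc_nat1_summ])
  have s2: "(\<lambda>x. cc (nat x)) summable_on A" using assms by (intro summable_on_subset[OF cc_nat_summ]) auto
  have "infsum (piw b) A = infsum (\<lambda>x. 2 * cc (nat x - 1) + 2 * cc (nat x)) A"
    using assms by (intro infsum_cong) (auto simp: piw_formula pp_def)
  also have "\<dots> = infsum (\<lambda>x. 2 * cc (nat x - 1)) A + infsum (\<lambda>x. 2 * cc (nat x)) A"
    using s1 s2 by (intro infsum_add summable_on_cmult_right)
  also have "\<dots> = 2 * infsum (\<lambda>x. cc (nat x - 1)) A + 2 * infsum (\<lambda>x. cc (nat x)) A"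
    using s1 s2 by (simp add: infsum_cmult_right)
  finally show ?thesis .
qed

lemma shift_sum: assumes "B \<subseteq> {x. x \<ge> 0}"
  shows "infsum (\<lambda>x. cc (nat x - 1)) ((\<lambda>y. y + 1) ` B) = infsum (\<lambda>y. cc (nat y)) B"
proof -
  have "infsum (\<lambda>x. cc (nat x - 1)) ((\<lambda>y. y + 1) ` B) = infsum ((\<lambda>x. cc (nat x - 1)) \<circ> (\<lambda>y. y + 1)) B"
    by (rule infsum_reindex) auto
  also have "\<dots> = infsum (\<lambda>y. cc (nat y)) B"
    using assms by (intro infsum_cong) (auto simp: nat_add_distrib)
  finally show ?thesis .
qed

lemma evenPos_shift: "evenPos = (\<lambda>y. y + 1) ` Od"
proof
  show "evenPos \<subseteq> (\<lambda>y. y + 1) ` Od"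
  proof
    fix x assume x: "x \<in> evenPos"
    hence "x - 1 \<in> Od" "x = (x - 1) + 1" by (auto simp: evenPos_def Od_def)
    thus "x \<in> (\<lambda>y. y + 1) ` Od" by blast
  qed
  show "(\<lambda>y. y + 1) ` Od \<subseteq> evenPos" by (auto simp: evenPos_def Od_def)
qed

lemma Od_shift: "Od = (\<lambda>y. y + 1) ` {z. z \<ge> 0 \<and> even z}"
proof
  show "Od \<subseteq> (\<lambda>y. y + 1) ` {z. z \<ge> 0 \<and> even z}"
  proof
    fix x assume x: "x \<in> Od"
    hence "x - 1 \<in> {z. z \<ge> 0 \<and> even z}" "x = (x - 1) + 1" by (auto simp: Od_def)
    thus "x \<in> (\<lambda>y. y + 1) ` {z. z \<ge> 0 \<and> even z}" by blast
  qed
  show "(\<lambda>y. y + 1) ` {z. z \<ge> 0 \<and> even z} \<subseteq> Od" by (auto simp: Od_def)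
qed

lemma even_odd_eq: "infsum (piw b) Od = infsum (piw b) evenPos"
proof -
  have e1: "infsum (\<lambda>x. cc (nat x - 1)) evenPos = infsum (\<lambda>y. cc (nat y)) Od"
    unfolding evenPos_shift by (rule shift_sum) (auto simp: Od_def)
  have e2: "infsum (\<lambda>x. cc (nat x - 1)) Od = infsum (\<lambda>y. cc (nat y)) {z. z \<ge> 0 \<and> even z}"
    by (subst Od_shift) (rule shift_sum, auto)
  have e3: "infsum (\<lambda>y. cc (nat y)) {z. z \<ge> 0 \<and> even z} = infsum (\<lambda>y. cc (nat y)) evenPos"
    by (rule infsum_cong_neutral) (auto simp: evenPos_def)
  have "infsum (piw b) Od = 2 * infsum (\<lambda>x. cc (nat x - 1)) Od + 2 * infsum (\<lambda>x. cc (nat x)) Od"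
    by (rule piw_split) (auto simp: Od_def)
  moreover have "infsum (piw b) evenPos = 2 * infsum (\<lambda>x. cc (nat x - 1)) evenPos + 2 * infsum (\<lambda>x. cc (nat x)) evenPos"
    by (rule piw_split) (auto simp: evenPos_def)
  ultimately show ?thesis using e1 e2 e3 by simp
qed

lemma Zall_eq: "Zall = 4 * infsum (piw b) evenPos"
proof -
  define Pos where "Pos = {x::int. x > 0}"
  have U: "UNIV - {0} = Pos \<union> uminus ` Pos"
  proof (rule set_eqI)
    fix x :: int
    show "x \<in> UNIV - {0} \<longleftrightarrow> x \<in> Pos \<union> uminus ` Pos"
    proof
      assume "x \<in> UNIV - {0}"
      hence "x > 0 \<or> -x > 0" by auto
      thus "x \<in> Pos \<union> uminus ` Pos" unfolding Pos_def
        by (metis (mono_tags) UnI1 UnI2 image_eqI mem_Collect_eq minus_minus)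
    next
      assume "x \<in> Pos \<union> uminus ` Pos" thus "x \<in> UNIV - {0}" unfolding Pos_def by auto
    qed
  qed
  have neg: "infsum (piw b) (uminus ` Pos) = infsum (piw b) Pos"
  proof -
    have "infsum (piw b) (uminus ` Pos) = infsum (piw b \<circ> uminus) Pos" by (rule infsum_reindex) auto
    thus ?thesis by (simp add: o_def piw_sym)
  qed
  have z1: "Zall = infsum (piw b) Pos + infsum (piw b) (uminus ` Pos)"
    unfolding Zall_def U by (rule infsum_Un_disjoint) (auto simp: piw_summ Pos_def)
  have pe: "Pos = evenPos \<union> Od" by (auto simp: Pos_def evenPos_def Od_def)
  have z2: "infsum (piw b) Pos = infsum (piw b) evenPos + infsum (piw b) Od"
    unfolding pe by (rule infsum_Un_disjoint) (auto simp: piw_summ evenPos_def Od_def)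
  show ?thesis using z1 z2 neg even_odd_eq by linarith
qed

lemma E_pos: "infsum (piw b) evenPos > 0"
proof -
  have "sum (piw b) {2} \<le> infsum (piw b) evenPos"
    by (rule infsum_ge_fin) (auto simp: piw_summ evenPos_def piw_nonneg)
  moreover have "piw b 2 > 0" by (rule piw_pos) simp
  ultimately show ?thesis by simp
qed

lemma Zall_pos: "Zall > 0" using E_pos Zall_eq by simp

lemma mu_eq: "mu b x = piw b x / Zall" by (simp add: mu_def Zall_def)

lemma infsum_div: fixes f :: "'a \<Rightarrow> real" assumes "f summable_on A" shows "infsum (\<lambda>x. f x / c) A = infsum f A / c"
proof -
  have "infsum (\<lambda>x. f x * inverse c) A = infsum f A * inverse c" by (rule infsum_cmult_left) (use assms in simp)
  thus ?thesis by (simp add: divide_inverse)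
qed

lemma probY0_eq: "probY0 b evenPos = 1/4"
proof -
  have "evenPos - {0} = evenPos" by (auto simp: evenPos_def)
  hence "probY0 b evenPos = infsum (\<lambda>x. piw b x / Zall) evenPos" by (simp add: probY0_def mu_eq)
  also have "\<dots> = infsum (piw b) evenPos / Zall" by (rule infsum_div[OF piw_summ])
  finally show ?thesis using Zall_eq E_pos by simp
qed


lemma S_summ: "(\<lambda>x. piw b x * sv n (nat x)) summable_on evenPos"
proof (rule summ_dom)
  fix x assume x: "x \<in> evenPos"
  hence "nat x \<ge> 1" by (auto simp: evenPos_def)
  hence "0 \<le> sv n (nat x)" "sv n (nat x) \<le> 1" using sv_bounds by auto
  thus "0 \<le> piw b x * sv n (nat x) \<and> piw b x * sv n (nat x) \<le> piw b x"
    using piw_nonneg[of x] mult_left_le[of "sv n (nat x)" "piw b x"] by simp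
qed

definition SS :: "nat \<Rightarrow> real" where "SS n = infsum (\<lambda>x. piw b x * sv n (nat x)) evenPos"

lemma probCond_eq: "probCond b evenPos (Suc n) = 1/4 + SS n / Zall"
proof -
  have E0: "evenPos - {0} = evenPos" by (auto simp: evenPos_def)
  have s1: "(\<lambda>x. piw b x / (4 * Zall)) summable_on evenPos"
  proof -
    have "(\<lambda>x. piw b x * inverse (4 * Zall)) summable_on evenPos" by (rule summable_on_cmult_left[OF piw_summ])
    thus ?thesis unfolding divide_inverse .
  qed
  have s2: "(\<lambda>x. piw b x * sv n (nat x) / (4 * Zall)) summable_on evenPos"
  proof -
    have "(\<lambda>x. piw b x * sv n (nat x) * inverse (4 * Zall)) summable_on evenPos" by (rule summable_on_cmult_left[OF S_summ])
    thus ?thesis unfolding divide_inverse .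
  qed
  have "infsum (\<lambda>x. mu b x * hitP b evenPos (Suc n) x) evenPos
      = infsum (\<lambda>x. piw b x / (4 * Zall) + piw b x * sv n (nat x) / (4 * Zall)) evenPos"
  proof (rule infsum_cong)
    fix x assume "x \<in> evenPos"
    hence x0: "x > 0" by (simp add: evenPos_def)
    have h: "hitP b evenPos (Suc n) x = 1/4 + sv n (nat x) / 4"
      unfolding hit_closed using x0 by (simp add: HH_def)
    show "mu b x * hitP b evenPos (Suc n) x = piw b x / (4 * Zall) + piw b x * sv n (nat x) / (4 * Zall)"
      unfolding h using Zall_pos by (simp add: mu_eq field_simps)
  qed
  also have "\<dots> = infsum (\<lambda>x. piw b x / (4 * Zall)) evenPos + infsum (\<lambda>x. piw b x * sv n (nat x) / (4 * Zall)) evenPos"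
    by (rule infsum_add[OF s1 s2])
  also have "infsum (\<lambda>x. piw b x / (4 * Zall)) evenPos = infsum (piw b) evenPos / (4 * Zall)"
    by (rule infsum_div[OF piw_summ])
  also have "infsum (\<lambda>x. piw b x * sv n (nat x) / (4 * Zall)) evenPos = SS n / (4 * Zall)"
    unfolding SS_def by (rule infsum_div[OF S_summ])
  finally have fin: "infsum (\<lambda>x. mu b x * hitP b evenPos (Suc n) x) evenPos
      = infsum (piw b) evenPos / (4 * Zall) + SS n / (4 * Zall)" .
  have q: "infsum (piw b) evenPos / (4 * Zall) = 1/16" using Zall_eq E_pos by simp
  have "probCond b evenPos (Suc n) = infsum (\<lambda>x. mu b x * hitP b evenPos (Suc n) x) evenPos / (1/4)"
    unfolding probCond_def E0 probY0_eq ..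
  also have "\<dots> = (1/16 + SS n / (4 * Zall)) / (1/4)" unfolding fin q ..
  also have "\<dots> = 1/4 + SS n / Zall" using Zall_pos by (simp add: field_simps)
  finally show ?thesis .
qed

lemma SS_upper: "SS n \<le> Fq n"
  unfolding SS_def
proof (rule infsum_le_finite_sums[OF S_summ])
  fix F assume F: "finite F" "F \<subseteq> evenPos"
  define N where "N = Suc n + (\<Sum>y\<in>F. nat y)"
  have inj: "inj_on nat F" using F by (auto simp: inj_on_def evenPos_def)
  have sub: "nat ` F \<subseteq> {1..N}"
  proof
    fix a assume "a \<in> nat ` F"
    then obtain y where y: "y \<in> F" "a = nat y" by auto
    have "nat y \<le> (\<Sum>y\<in>F. nat y)" using F y by (intro member_le_sum) auto
    moreover have "nat y \<ge> 1" using F y by (auto simp: evenPos_def)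
    ultimately show "a \<in> {1..N}" using y by (simp add: N_def)
  qed
  have "(\<Sum>x\<in>F. piw b x * sv n (nat x)) = (\<Sum>a\<in>nat ` F. pp a * sv n a)"
  proof -
    have "(\<Sum>a\<in>nat ` F. pp a * sv n a) = (\<Sum>x\<in>F. pp (nat x) * sv n (nat x))"
      using sum.reindex[OF inj, of "\<lambda>a. pp a * sv n a"] by simp
    also have "\<dots> = (\<Sum>x\<in>F. piw b x * sv n (nat x))"
      using F by (intro sum.cong) (auto simp: piw_formula evenPos_def)
    finally show ?thesis by simp
  qed
  also have "\<dots> \<le> (\<Sum>a\<in>{1..N}. pp a * sv n a)"
    using sub pp_nonneg sv_bounds by (intro sum_mono2) (auto intro!: mult_nonneg_nonneg)
  also have "\<dots> = ip N (\<lambda>_. 1) (sv n)" by (simp add: ip_def)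
  also have "\<dots> \<le> Fq n" using Fq_eq[of n N] tl_pos[of "Suc N"] by (simp add: N_def)
  finally show "(\<Sum>x\<in>F. piw b x * sv n (nat x)) \<le> Fq n" .
qed

lemma SS_lower: "ip N ev (sv n) \<le> SS n"
proof -
  define A where "A = {a \<in> {1..N}. even a}"
  have "ip N ev (sv n) = (\<Sum>a\<in>{1..N}. if even a then pp a * sv n a else 0)"
    unfolding ip_def by (intro sum.cong) (auto simp: ev_def)
  also have "\<dots> = (\<Sum>a\<in>A. pp a * sv n a)" unfolding A_def by (rule sum.inter_filter[symmetric]) simp
  also have "\<dots> = (\<Sum>x\<in>int ` A. piw b x * sv n (nat x))"
  proof -
    have "(\<Sum>x\<in>int ` A. piw b x * sv n (nat x)) = (\<Sum>a\<in>A. piw b (int a) * sv n (nat (int a)))"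
      by (rule sum.reindex_cong[of int]) (auto simp: inj_on_def)
    also have "\<dots> = (\<Sum>a\<in>A. pp a * sv n a)" by (simp add: piw_formula)
    finally show ?thesis by simp
  qed
  also have "\<dots> \<le> SS n" unfolding SS_def
  proof (rule infsum_ge_fin[OF S_summ])
    show "finite (int ` A)" by (simp add: A_def)
    show "int ` A \<subseteq> evenPos" by (auto simp: A_def evenPos_def even_of_nat)
    fix x assume "x \<in> evenPos"
    hence "nat x \<ge> 1" by (auto simp: evenPos_def)
    thus "piw b x * sv n (nat x) \<ge> 0" using sv_bounds piw_nonneg by (auto intro: mult_nonneg_nonneg)
  qed
  finally show ?thesis .
qed

lemma probStay_eq: "probStay b evenPos t = (1/2)^t / 4"
proof -
  have E0: "evenPos - {0} = evenPos" by (auto simp: evenPos_def)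
  have "probStay b evenPos t = infsum (\<lambda>x. piw b x / (Zall / (1/2)^t)) evenPos"
    unfolding probStay_def E0 by (intro infsum_cong) (simp add: mu_eq stay_closed)
  also have "\<dots> = infsum (piw b) evenPos / (Zall / (1/2)^t)" by (rule infsum_div[OF piw_summ])
  finally show ?thesis using Zall_eq E_pos by simp
qed


lemma lim_aux: "((\<lambda>t. e + c / ln (real t)) \<longlongrightarrow> e) sequentially"
proof -
  have "filterlim (\<lambda>t. ln (real t)) at_top sequentially"
    by (rule filterlim_compose[OF ln_at_top filterlim_real_sequentially])
  hence "((\<lambda>t. c / ln (real t)) \<longlongrightarrow> 0) sequentially"
    by (intro tendsto_divide_0[OF tendsto_const] filterlim_at_top_imp_at_infinity)
  hence "((\<lambda>t. e + c / ln (real t)) \<longlongrightarrow> e + 0) sequentially" by (intro tendsto_add tendsto_const)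
  thus ?thesis by simp
qed

lemma main_bw:
  "probY0 b evenPos = 1/4
    \<and> (\<forall>\<^sub>F t in sequentially. probCond b evenPos t > 1/4)
    \<and> ((\<lambda>t. ln (probCond b evenPos t - 1/4) / ln (real t)) \<longlongrightarrow> (1 - b) / 2) sequentially
    \<and> (\<exists>C c. c > 0 \<and> (\<forall>t. probStay b evenPos t \<le> C * exp (- c * real t)))"
proof -
  define e where "e = (1 - b) / 2"
  have e0: "e < 0" "-e \<le> 1" using b1 b2 by (auto simp: e_def)
  obtain cl where cl: "cl > 0" "\<And>n. n \<ge> 2 \<Longrightarrow> \<exists>N0. \<forall>N\<ge>N0. even N \<longrightarrow> ip N ev (sv n) \<ge> cl * real n powr e"
    using lower_final unfolding e_def by blast
  obtain cu where cu: "\<And>n. n \<ge> 2 \<Longrightarrow> Fq n \<le> cu * real n powr e"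
    using upper_final unfolding e_def by blast
  have SSlo: "SS n \<ge> cl * real n powr e" if n2: "n \<ge> 2" for n
  proof -
    obtain N0 where N0: "\<forall>N\<ge>N0. even N \<longrightarrow> ip N ev (sv n) \<ge> cl * real n powr e" using cl(2)[OF n2] by blast
    have "ip (2 * N0) ev (sv n) \<ge> cl * real n powr e" using N0 by simp
    thus ?thesis using SS_lower[of "2 * N0" n] by linarith
  qed
  have SSup: "SS n \<le> cu * real n powr e" if "n \<ge> 2" for n
    using SS_upper[of n] cu[OF that] by linarith
  have cupos: "cu > 0"
  proof -
    have "cl * real 2 powr e \<le> cu * real 2 powr e" using SSlo[of 2] SSup[of 2] by linarith
    moreover have "real 2 powr e > 0" by simp
    ultimately have "cl \<le> cu" by simp
    thus ?thesis using cl(1) by simp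
  qed
  define L where "L = cl / Zall"
  define U where "U = 2 * cu / Zall"
  have LU: "L > 0" "U > 0" using cl(1) cupos Zall_pos by (auto simp: L_def U_def)
  have Dt: "probCond b evenPos t - 1/4 = SS (t - 1) / Zall" if "t \<ge> 1" for t
    using probCond_eq[of "t-1"] that by simp
  have bounds: "L * real t powr e \<le> probCond b evenPos t - 1/4 \<and> probCond b evenPos t - 1/4 \<le> U * real t powr e"
    if t: "t \<ge> 3" for t
  proof -
    define n where "n = t - 1"
    have n2: "n \<ge> 2" using t by (simp add: n_def)
    have nt: "real n \<le> real t" "real t / 2 \<le> real n" using t by (auto simp: n_def)
    have np: "real n > 0" using n2 by simp
    have a1: "real t powr e \<le> real n powr e" using nt np e0 by (intro powr_mono2') auto
    have a2: "real n powr e \<le> (real t / 2) powr e" using nt t e0 by (intro powr_mono2') auto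
    have a3: "(real t / 2) powr e = real t powr e * 2 powr (-e)" by (simp add: powr_divide powr_minus_divide)
    have a4: "(2::real) powr (-e) \<le> 2 powr 1" using e0 by (intro powr_mono) auto
    have tp: "real t powr e \<ge> 0" by simp
    have a5: "real n powr e \<le> 2 * real t powr e"
    proof -
      have "real t powr e * 2 powr (-e) \<le> real t powr e * 2" using a4 tp by (intro mult_left_mono) auto
      thus ?thesis using a2 a3 by simp
    qed
    have D: "probCond b evenPos t - 1/4 = SS n / Zall" using Dt[of t] t by (simp add: n_def)
    have "cl * real t powr e \<le> cl * real n powr e" using a1 cl(1) by (intro mult_left_mono) auto
    hence lo: "cl * real t powr e \<le> SS n" using SSlo[OF n2] by linarith
    have "cu * real n powr e \<le> cu * (2 * real t powr e)" using a5 cupos by (intro mult_left_mono) auto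
    hence up: "SS n \<le> cu * (2 * real t powr e)" using SSup[OF n2] by linarith
    have "L * real t powr e \<le> SS n / Zall" unfolding L_def using lo Zall_pos by (simp add: field_simps)
    moreover have "SS n / Zall \<le> U * real t powr e" unfolding U_def using up Zall_pos by (simp add: field_simps)
    ultimately show ?thesis using D by simp
  qed
  have ev_pos: "\<forall>\<^sub>F t in sequentially. probCond b evenPos t > 1/4"
  proof (rule eventually_sequentiallyI[of 3])
    fix t :: nat assume "t \<ge> 3"
    hence "L * real t powr e > 0" using LU by simp
    thus "probCond b evenPos t > 1/4" using bounds[OF \<open>t \<ge> 3\<close>] by linarith
  qed
  have lim: "((\<lambda>t. ln (probCond b evenPos t - 1/4) / ln (real t)) \<longlongrightarrow> e) sequentially"
  proof (rule tendsto_sandwich[OF _ _ lim_aux[of e "ln L"] lim_aux[of e "ln U"]])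
    show "\<forall>\<^sub>F t in sequentially. e + ln L / ln (real t) \<le> ln (probCond b evenPos t - 1/4) / ln (real t)"
    proof (rule eventually_sequentiallyI[of 3])
      fix t :: nat assume t: "t \<ge> 3"
      have lnt: "ln (real t) > 0" using t by simp
      have "L * real t powr e > 0" using LU t by simp
      hence "ln (L * real t powr e) \<le> ln (probCond b evenPos t - 1/4)" using bounds[OF t] by simp
      moreover have "ln (L * real t powr e) = ln L + e * ln (real t)" using LU t by (simp add: ln_mult)
      ultimately have "ln L + e * ln (real t) \<le> ln (probCond b evenPos t - 1/4)" by simp
      hence "(ln L + e * ln (real t)) / ln (real t) \<le> ln (probCond b evenPos t - 1/4) / ln (real t)"
        using lnt by (intro divide_right_mono) auto
      moreover have "(ln L + e * ln (real t)) / ln (real t) = e + ln L / ln (real t)" using lnt by (simp add: field_simps)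
      ultimately show "e + ln L / ln (real t) \<le> ln (probCond b evenPos t - 1/4) / ln (real t)" by simp
    qed
    show "\<forall>\<^sub>F t in sequentially. ln (probCond b evenPos t - 1/4) / ln (real t) \<le> e + ln U / ln (real t)"
    proof (rule eventually_sequentiallyI[of 3])
      fix t :: nat assume t: "t \<ge> 3"
      have lnt: "ln (real t) > 0" using t by simp
      have "L * real t powr e > 0" using LU t by simp
      hence pos: "probCond b evenPos t - 1/4 > 0" using bounds[OF t] by linarith
      hence "ln (probCond b evenPos t - 1/4) \<le> ln (U * real t powr e)" using bounds[OF t] by simp
      moreover have "ln (U * real t powr e) = ln U + e * ln (real t)" using LU t by (simp add: ln_mult)
      ultimately have "ln (probCond b evenPos t - 1/4) \<le> ln U + e * ln (real t)" by simp
      hence "ln (probCond b evenPos t - 1/4) / ln (real t) \<le> (ln U + e * ln (real t)) / ln (real t)"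
        using lnt by (intro divide_right_mono) auto
      moreover have "(ln U + e * ln (real t)) / ln (real t) = e + ln U / ln (real t)" using lnt by (simp add: field_simps)
      ultimately show "ln (probCond b evenPos t - 1/4) / ln (real t) \<le> e + ln U / ln (real t)" by simp
    qed
  qed
  have stay: "\<forall>t. probStay b evenPos t \<le> 1 * exp (- ln 2 * real t)"
  proof
    fix t
    have "exp (- ln 2 * real t) = exp (real t * (- ln 2))" by (simp add: mult.commute)
    also have "\<dots> = exp (- ln 2) ^ t" by (rule exp_of_nat_mult)
    also have "exp (- ln 2) = (1/2::real)" by (simp add: exp_minus)
    finally have "exp (- ln 2 * real t) = (1/2) ^ t" .
    moreover have "(1/2::real) ^ t / 4 \<le> (1/2) ^ t" by simp
    moreover have "probStay b evenPos t = (1/2) ^ t / 4" by (rule probStay_eq)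
    ultimately show "probStay b evenPos t \<le> 1 * exp (- ln 2 * real t)" by linarith
  qed
  show ?thesis using probY0_eq ev_pos lim stay unfolding e_def
    by (intro conjI exI[of _ 1] exI[of _ "ln 2"]) auto
qed

end

theorem mainTheorem8:
  fixes \<beta> :: real
  assumes "1 < \<beta>" and "\<beta> < 2"
  shows "probY0 \<beta> evenPos = 1/4
    \<and> (\<forall>\<^sub>F t in sequentially. probCond \<beta> evenPos t > 1/4)
    \<and> ((\<lambda>t. ln (probCond \<beta> evenPos t - 1/4) / ln (real t))
          \<longlongrightarrow> (1 - \<beta>) / 2) sequentially
    \<and> (\<exists>C c. c > 0 \<and> (\<forall>t. probStay \<beta> evenPos t \<le> C * exp (- c * real t)))"
proof -
  interpret bw \<beta> using assms by unfold_locales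
  show ?thesis by (rule main_bw)
qed

end
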